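(* Let $1\le p<\infty$, $N\ge2$, and for $1\le i\le N$ let $T_i=T_{f_i,\omega^{(i)}}$ be unilateral pseudo-shifts on $\ell^p(\mathbb{N})$ with maps $f_i$ and weights $\omega^{(i)}=(w^{(i)}_{f_i(m)})_m$; let $W^{(i)}_{m,n}=\prod_{\nu=1}^nw^{(i)}_{f_i^\nu(m)}$. The following are equivalent: (i) $T_1,\dots,T_N$ are s-weakly mixing. (ii) $T_1,\dots,T_N$ satisfy the Simultaneous Hypercyclicity Criterion. (iii) For each $R\in\mathbb{N}$, the direct sums $\oplus_{r=1}^RT_1,\dots,\oplus_{r=1}^RT_N$ satisfy the Simultaneous Blow-up/Collapse Criterion. (iv) There is a strictly increasing sequence $(n_k)$ of positive integers such that (a) $|W^{(i)}_{m,n_k}|\to\infty$ as $k\to\infty$ for all $m\in\mathbb{N}$, $1\le i\le N$; and (b) for each $\epsilon>0$ and $K,M\in\mathbb{N}$ there is $k\ge K$ such that for all $1\le i,\ell\le N$ with $i\ne\ell$: $\left|\frac{W^{(i)}_{f_i^{-n_k}(j),n_k}}{W^{(\ell)}_{f_\ell^{-n_k}(j),n_k}}\right|<\epsilon$ whenever $j\in f_\ell^{n_k}([M])\cap f_i^{n_k}(\mathbb{N}\setminus[M])$, and for every $j\in f_\ell^{n_k}([M])\cap f_i^{n_k}([M])$ we have $f_\ell^{-n_k}(j)=f_i^{-n_k}(j)$ and $\left|\frac{W^{(i)}_{f_i^{-n_k}(j),n_k}}{W^{(\ell)}_{f_\ell^{-n_k}(j),n_k}}-1\right|<\epsilon$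.
   Context: $\mathbb{N}=\{1,2,\dots\}$; $\{e_m\}$ is the canonical basis of $\ell^p(\mathbb{N})$ over $\mathbb{K}\in\{\mathbb{R},\mathbb{C}\}$. For a strictly increasing $f:\mathbb{N}\to\mathbb{N}$ with $f(1)>1$ and a bounded, nonzero sequence of scalars $\omega=(w_{f(m)})_m$, $T_{f,\omega}(\sum_m\alpha_me_m)=\sum_mw_{f(m)}\alpha_{f(m)}e_m$. $[M]=\{1,\dots,M\}$, $f^n$ the $n$-fold composition, $f(A)=\{f(m):m\in A\}$, $f^{-n}$ the inverse of $f^n$ on $f^n(\mathbb{N})$. For operators $S_1,\dots,S_N$ on a Banach space $Y$: they are s-topologically transitive if for all non-empty open $U,V\subset Y$ there is $n$ with $V\cap S_1^{-n}(U)\cap\cdots\cap S_N^{-n}(U)\ne\emptyset$; s-weakly mixing if $S_1\oplus S_1,\dots,S_N\oplus S_N$ are s-topologically transitive. They satisfy the Simultaneous Hypercyclicity Criterion if there exist a strictly increasing $(n_k)$, a dense $Y_0\subset Y$, a set $W_0\subset\oplus_{i=1}^NY$ whose closure contains the diagonal $\{(y,\dots,y):y\in Y\}$, and maps $R_k:W_0\to Y$ with: $S_i^{n_k}\to0$ pointwise on $Y_0$ for each $i$; $R_k\to0$ pointwise on $W_0$; and for each $w=(w_1,\dots,w_N)\in W_0$ and each $i$ there is $y_i$ in the convex hull of $\{w_1,\dots,w_N\}$ with $S_i^{n_k}R_kw\to y_i$. They satisfy the Simultaneous Blow-up/Collapse Criterion if there exist an increasing $(n_k)$, a dense $Y_0\subset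 Y$ and maps $S_k:Y_0\to Y$ with $S_i^{n_k}y\to0$ for all $y\in Y_0$, $1\le i\le N$, and such that for each $\epsilon>0$, $K\in\mathbb{N}$, $y_0\in Y_0$ there is $k\ge K$ with $\|S_k(y_0)\|<\epsilon$ and $\|S_i^{n_k}S_k(y_0)-y_0\|<\epsilon$ for all $i$. *)

theory Defs
  imports "HOL-Analysis.Analysis" "HOL-Library.Function_Algebras"
begin

definition scalars_R_or_C :: "'k::real_normed_field itself \<Rightarrow> bool" where
  "scalars_R_or_C (_::'k itself) \<longleftrightarrow>
     (\<exists>\<phi>::'k \<Rightarrow> real. bij \<phi> \<and> (\<forall>x y. \<phi> (x + y) = \<phi> x + \<phi> y \<and> \<phi> (x * y) = \<phi> x * \<phi> y)
          \<and> (\<forall>x. norm (\<phi> x) = norm x))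
   \<or> (\<exists>\<phi>::'k \<Rightarrow> complex. bij \<phi> \<and> (\<forall>x y. \<phi> (x + y) = \<phi> x + \<phi> y \<and> \<phi> (x * y) = \<phi> x * \<phi> y)
          \<and> (\<forall>x. norm (\<phi> x) = norm x))"

section \<open>The space l^p(N), N = {1,2,...}; coordinate 0 is unused and fixed to 0\<close>

definition lp_space :: "real \<Rightarrow> (nat \<Rightarrow> 'k::real_normed_vector) set" where
  "lp_space p = {x. x 0 = 0 \<and> summable (\<lambda>m. norm (x m) powr p)}"

definition lp_dist :: "real \<Rightarrow> (nat \<Rightarrow> 'k::real_normed_vector) \<Rightarrow> (nat \<Rightarrow> 'k) \<Rightarrow> real" where
  "lp_dist p x y = (\<Sum>m. norm (x m - y m) powr p) powr (1 / p)"

definition pseudo_shift_data :: "(nat \<Rightarrow> nat) \<Rightarrow> (nat \<Rightarrow> 'k::real_normed_field) \<Rightarrow> bool" where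
  "pseudo_shift_data f w \<longleftrightarrow>
     strict_mono_on {1..} f \<and> f 1 > 1 \<and>
     (\<exists>B. \<forall>m\<ge>1. norm (w (f m)) \<le> B) \<and> (\<forall>m\<ge>1. w (f m) \<noteq> 0)"

definition pseudo_shift :: "(nat \<Rightarrow> nat) \<Rightarrow> (nat \<Rightarrow> 'k::real_normed_field) \<Rightarrow> (nat \<Rightarrow> 'k) \<Rightarrow> (nat \<Rightarrow> 'k)" where
  "pseudo_shift f w x = (\<lambda>m. if m = 0 then 0 else w (f m) * x (f m))"

definition Wprod :: "(nat \<Rightarrow> nat) \<Rightarrow> (nat \<Rightarrow> 'k::real_normed_field) \<Rightarrow> nat \<Rightarrow> nat \<Rightarrow> 'k" where
  "Wprod f w m n = (\<Prod>\<nu>\<in>{1..n}. w ((f ^^ \<nu>) m))"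

definition open_in_ms :: "'v set \<Rightarrow> ('v \<Rightarrow> 'v \<Rightarrow> real) \<Rightarrow> 'v set \<Rightarrow> bool" where
  "open_in_ms X d U \<longleftrightarrow> U \<subseteq> X \<and> (\<forall>x\<in>U. \<exists>e>0. \<forall>y\<in>X. d x y < e \<longrightarrow> y \<in> U)"

definition dense_in_ms :: "'v set \<Rightarrow> ('v \<Rightarrow> 'v \<Rightarrow> real) \<Rightarrow> 'v set \<Rightarrow> bool" where
  "dense_in_ms X d A \<longleftrightarrow> A \<subseteq> X \<and> (\<forall>x\<in>X. \<forall>e>0. \<exists>a\<in>A. d x a < e)"

definition conv_ms :: "('v \<Rightarrow> 'v \<Rightarrow> real) \<Rightarrow> (nat \<Rightarrow> 'v) \<Rightarrow> 'v \<Rightarrow> bool" where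
  "conv_ms d s y \<longleftrightarrow> (\<lambda>k. d (s k) y) \<longlonglongrightarrow> 0"

definition dsum_carrier :: "nat \<Rightarrow> 'v::zero set \<Rightarrow> (nat \<Rightarrow> 'v) set" where
  "dsum_carrier R X = {x. (\<forall>r\<in>{1..R}. x r \<in> X) \<and> (\<forall>r. r \<notin> {1..R} \<longrightarrow> x r = 0)}"

definition dsum_dist :: "nat \<Rightarrow> ('v \<Rightarrow> 'v \<Rightarrow> real) \<Rightarrow> (nat \<Rightarrow> 'v) \<Rightarrow> (nat \<Rightarrow> 'v) \<Rightarrow> real" where
  "dsum_dist R d x y = (\<Sum>r\<in>{1..R}. d (x r) (y r))"

definition dsum_op :: "nat \<Rightarrow> ('v::zero \<Rightarrow> 'v) \<Rightarrow> (nat \<Rightarrow> 'v) \<Rightarrow> (nat \<Rightarrow> 'v)" where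
  "dsum_op R S x = (\<lambda>r. if r \<in> {1..R} then S (x r) else 0)"

definition s_top_transitive :: "'v set \<Rightarrow> ('v \<Rightarrow> 'v \<Rightarrow> real) \<Rightarrow> nat \<Rightarrow> (nat \<Rightarrow> 'v \<Rightarrow> 'v) \<Rightarrow> bool" where
  "s_top_transitive X d N S \<longleftrightarrow>
     (\<forall>U V. open_in_ms X d U \<longrightarrow> open_in_ms X d V \<longrightarrow> U \<noteq> {} \<longrightarrow> V \<noteq> {} \<longrightarrow>
        (\<exists>n\<ge>1. \<exists>y\<in>V. \<forall>i\<in>{1..N}. (S i ^^ n) y \<in> U))"

definition s_weakly_mixing :: "'v::zero set \<Rightarrow> ('v \<Rightarrow> 'v \<Rightarrow> real) \<Rightarrow> nat \<Rightarrow> (nat \<Rightarrow> 'v \<Rightarrow> 'v) \<Rightarrow> bool" where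
  "s_weakly_mixing X d N S \<longleftrightarrow>
     s_top_transitive (dsum_carrier 2 X) (dsum_dist 2 d) N (\<lambda>i. dsum_op 2 (S i))"

definition in_conv_hull :: "nat \<Rightarrow> (nat \<Rightarrow> 'a \<Rightarrow> 'k::real_vector) \<Rightarrow> ('a \<Rightarrow> 'k) \<Rightarrow> bool" where
  "in_conv_hull N w y \<longleftrightarrow>
     (\<exists>c::nat \<Rightarrow> real. (\<forall>j\<in>{1..N}. 0 \<le> c j) \<and> (\<Sum>j\<in>{1..N}. c j) = 1 \<and>
        y = (\<lambda>a. \<Sum>j\<in>{1..N}. c j *\<^sub>R w j a))"

definition sim_hc_criterion ::
  "('a \<Rightarrow> 'k::real_vector) set \<Rightarrow> (('a \<Rightarrow> 'k) \<Rightarrow> ('a \<Rightarrow> 'k) \<Rightarrow> real) \<Rightarrow> nat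
     \<Rightarrow> (nat \<Rightarrow> ('a \<Rightarrow> 'k) \<Rightarrow> ('a \<Rightarrow> 'k)) \<Rightarrow> bool" where
  "sim_hc_criterion X d N S \<longleftrightarrow>
     (\<exists>(nk::nat \<Rightarrow> nat) Y0 W0 (Rk::nat \<Rightarrow> (nat \<Rightarrow> 'a \<Rightarrow> 'k) \<Rightarrow> ('a \<Rightarrow> 'k)).
        strict_mono nk \<and> dense_in_ms X d Y0 \<and>
        W0 \<subseteq> dsum_carrier N X \<and>
        (\<forall>y\<in>X. \<forall>e>0. \<exists>w\<in>W0. dsum_dist N d w (\<lambda>r. if r \<in> {1..N} then y else 0) < e) \<and>
        (\<forall>k. \<forall>w\<in>W0. Rk k w \<in> X) \<and>
        (\<forall>i\<in>{1..N}. \<forall>y\<in>Y0. conv_ms d (\<lambda>k. (S i ^^ nk k) y) 0) \<and>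
        (\<forall>w\<in>W0. conv_ms d (\<lambda>k. Rk k w) 0) \<and>
        (\<forall>w\<in>W0. \<forall>i\<in>{1..N}. \<exists>y. in_conv_hull N w y \<and> conv_ms d (\<lambda>k. (S i ^^ nk k) (Rk k w)) y))"

definition sim_bc_criterion ::
  "'v::zero set \<Rightarrow> ('v \<Rightarrow> 'v \<Rightarrow> real) \<Rightarrow> nat \<Rightarrow> (nat \<Rightarrow> 'v \<Rightarrow> 'v) \<Rightarrow> bool" where
  "sim_bc_criterion X d N S \<longleftrightarrow>
     (\<exists>(nk::nat \<Rightarrow> nat) Y0 (Sk::nat \<Rightarrow> 'v \<Rightarrow> 'v).
        mono nk \<and> dense_in_ms X d Y0 \<and>
        (\<forall>k. \<forall>y\<in>Y0. Sk k y \<in> X) \<and>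
        (\<forall>i\<in>{1..N}. \<forall>y\<in>Y0. conv_ms d (\<lambda>k. (S i ^^ nk k) y) 0) \<and>
        (\<forall>e>0. \<forall>K. \<forall>y0\<in>Y0. \<exists>k\<ge>K. d (Sk k y0) 0 < e \<and>
            (\<forall>i\<in>{1..N}. d ((S i ^^ nk k) (Sk k y0)) y0 < e)))"

end

theory Submission
  imports Defs
begin


definition psum :: "real \<Rightarrow> (nat \<Rightarrow> 'k::real_normed_vector) \<Rightarrow> real" where
  "psum p x = (\<Sum>m. norm (x m) powr p)"

lemma pw_quasi:
  fixes a b :: "'a::real_normed_vector"
  assumes "p > 0"
  shows "norm (a + b) powr p \<le> 2 powr p * (norm a powr p + norm b powr p)"
proof -
  define M where "M = max (norm a) (norm b)"
  have "norm (a+b) \<le> 2 * M" using norm_triangle_ineq[of a b] unfolding M_def by linarith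
  hence "norm (a+b) powr p \<le> (2*M) powr p" by (intro powr_mono2) (use assms in auto)
  also have "\<dots> = 2 powr p * M powr p" by (simp add: powr_mult M_def)
  also have "M powr p \<le> norm a powr p + norm b powr p" unfolding M_def by (auto simp: max_def)
  hence "2 powr p * M powr p \<le> 2 powr p * (norm a powr p + norm b powr p)" by simp
  finally show ?thesis .
qed

lemma lp_add:
  fixes a b :: "nat \<Rightarrow> 'a::real_normed_vector"
  assumes p: "p > 0" and sa: "summable (\<lambda>m. norm (a m) powr p)" and sb: "summable (\<lambda>m. norm (b m) powr p)"
  shows "summable (\<lambda>m. norm (a m + b m) powr p)"
    "psum p (\<lambda>m. a m + b m) \<le> 2 powr p * (psum p a + psum p b)"
proof -
  have s2: "summable (\<lambda>m. 2 powr p * (norm (a m) powr p + norm (b m) powr p))"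
    using sa sb by (intro summable_mult summable_add)
  show s1: "summable (\<lambda>m. norm (a m + b m) powr p)"
    by (rule summable_comparison_test'[OF s2, of 0]) (use pw_quasi[OF p] in auto)
  have "psum p (\<lambda>m. a m + b m) \<le> (\<Sum>m. 2 powr p * (norm (a m) powr p + norm (b m) powr p))"
    unfolding psum_def by (rule suminf_le[OF _ s1 s2]) (use pw_quasi[OF p] in auto)
  also have "\<dots> = 2 powr p * (psum p a + psum p b)"
    unfolding psum_def using sa sb by (simp add: suminf_mult[OF summable_add[OF sa sb]] suminf_add)
  finally show "psum p (\<lambda>m. a m + b m) \<le> 2 powr p * (psum p a + psum p b)" .
qed

lemma psum_nonneg: "summable (\<lambda>m. norm (x m) powr p) \<Longrightarrow> 0 \<le> psum p x"
  unfolding psum_def by (rule suminf_nonneg) auto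

lemma coord_le_psum:
  assumes "summable (\<lambda>m. norm (x m) powr p)"
  shows "norm (x m) powr p \<le> psum p x"
  unfolding psum_def using sum_le_suminf[OF assms, of "{m}"] by auto

lemma coord_le:
  assumes p: "p > 0" and s: "summable (\<lambda>m. norm (x m) powr p)"
  shows "norm (x m) \<le> psum p x powr (1/p)"
proof -
  have "norm (x m) = (norm (x m) powr p) powr (1/p)" using p by (simp add: powr_powr)
  also have "\<dots> \<le> psum p x powr (1/p)"
    by (rule powr_mono2) (use p coord_le_psum[OF s] in auto)
  finally show ?thesis .
qed

lemma psum_finite:
  assumes "finite E" "\<And>m. m \<notin> E \<Longrightarrow> x m = 0" "p > 0"
  shows "summable (\<lambda>m. norm (x m) powr p)" "psum p x = (\<Sum>m\<in>E. norm (x m) powr p)"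
proof -
  have z: "\<And>m. m \<notin> E \<Longrightarrow> norm (x m) powr p = 0" using assms by auto
  show "summable (\<lambda>m. norm (x m) powr p)" by (rule summable_finite[OF assms(1) z])
  show "psum p x = (\<Sum>m\<in>E. norm (x m) powr p)" unfolding psum_def by (rule suminf_finite[OF assms(1) z])
qed

lemma psum_finite_le:
  assumes "finite E" "\<And>m. m \<notin> E \<Longrightarrow> x m = 0" "p > 0" "\<And>m. m \<in> E \<Longrightarrow> norm (x m) \<le> c"
  shows "psum p x \<le> real (card E) * c powr p"
proof -
  have "psum p x = (\<Sum>m\<in>E. norm (x m) powr p)" using psum_finite[OF assms(1-3)] by simp
  also have "\<dots> \<le> (\<Sum>m\<in>E. c powr p)" by (intro sum_mono powr_mono2) (use assms in auto)
  finally show ?thesis by simp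
qed

lemma dist_lt:
  assumes p: "p > 0" and e: "e > 0" and "psum p (\<lambda>m. x m - y m) < e powr p"
    and s: "summable (\<lambda>m. norm (x m - y m) powr p)"
  shows "lp_dist p x y < e"
proof -
  have "lp_dist p x y = psum p (\<lambda>m. x m - y m) powr (1/p)" unfolding lp_dist_def psum_def by simp
  also have "\<dots> < (e powr p) powr (1/p)"
    by (intro powr_less_mono2) (use assms psum_nonneg[OF s] in auto)
  also have "\<dots> = e" using p e by (simp add: powr_powr)
  finally show ?thesis .
qed




lemma Wprod_Suc: "Wprod g u m (Suc n) = u (g m) * Wprod g u (g m) n"
proof (induction n)
  case 0 thus ?case by (simp add: Wprod_def)
next
  case (Suc n)
  have A: "\<And>k m. Wprod g u m (Suc k) = Wprod g u m k * u ((g ^^ Suc k) m)"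
    unfolding Wprod_def by (simp add: prod.nat_ivl_Suc')
  have "Wprod g u m (Suc (Suc n)) = Wprod g u m (Suc n) * u ((g ^^ Suc (Suc n)) m)" by (rule A)
  also have "\<dots> = u (g m) * (Wprod g u (g m) n * u ((g ^^ Suc n) (g m)))"
    by (simp add: Suc funpow_Suc_right del: funpow.simps)
  also have "Wprod g u (g m) n * u ((g ^^ Suc n) (g m)) = Wprod g u (g m) (Suc n)" by (rule A[symmetric])
  finally show ?case .
qed

lemma Wprod_0[simp]: "Wprod g u m 0 = 1" by (simp add: Wprod_def)

lemma shift_pow:
  assumes "m \<ge> 1" "\<And>m. m \<ge> 1 \<Longrightarrow> g m \<ge> 1"
  shows "(pseudo_shift g u ^^ n) z m = Wprod g u m n * z ((g ^^ n) m)"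
  using assms(1)
proof (induction n arbitrary: m)
  case 0 thus ?case by simp
next
  case (Suc n)
  have "(pseudo_shift g u ^^ Suc n) z m = u (g m) * (pseudo_shift g u ^^ n) z (g m)"
    using Suc.prems by (simp add: pseudo_shift_def)
  also have "\<dots> = u (g m) * (Wprod g u (g m) n * z ((g ^^ n) (g m)))"
    using Suc.IH[of "g m"] assms(2) Suc.prems by simp
  finally show ?case by (simp add: Wprod_Suc funpow_Suc_right del: funpow.simps)
qed

lemma shift_pow0:
  assumes "n \<ge> 1" shows "(pseudo_shift g u ^^ n) z 0 = 0"
  using assms by (cases n) (auto simp: pseudo_shift_def)

locale PS =
  fixes p :: real and N :: nat and f :: "nat \<Rightarrow> nat \<Rightarrow> nat"
    and w :: "nat \<Rightarrow> nat \<Rightarrow> 'k::real_normed_field"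
  assumes p1: "1 \<le> p" and N1: "1 \<le> N" and data: "\<forall>i\<in>{1..N}. pseudo_shift_data (f i) (w i)"
begin

lemma p0: "p > 0" using p1 by simp

lemma f_mono: "i \<in> {1..N} \<Longrightarrow> strict_mono_on {1..} (f i)"
  using data by (auto simp: pseudo_shift_data_def)

lemma f_ge: assumes "i \<in> {1..N}" "m \<ge> 1" shows "f i m \<ge> m + 1"
  using assms(2)
proof (induction m rule: dec_induct)
  case base
  have "f i 1 > 1" using data assms(1) by (auto simp: pseudo_shift_data_def)
  thus ?case by simp
next
  case (step k)
  have "f i k < f i (Suc k)" using f_mono[OF assms(1)] step(1) by (auto simp: strict_mono_on_def)
  thus ?case using step by simp
qed

lemma fn_ge: assumes "i \<in> {1..N}" "m \<ge> 1" shows "(f i ^^ n) m \<ge> m + n"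
proof (induction n)
  case 0 thus ?case by simp
next
  case (Suc n)
  have "(f i ^^ Suc n) m = f i ((f i ^^ n) m)" by simp
  also have "\<dots> \<ge> (f i ^^ n) m + 1" by (rule f_ge[OF assms(1)]) (use Suc assms in simp)
  finally show ?case using Suc by simp
qed

lemma fn_mono: assumes "i \<in> {1..N}" shows "strict_mono_on {1..} (f i ^^ n)"
proof (induction n)
  case 0 thus ?case by (simp add: strict_mono_on_def)
next
  case (Suc n)
  show ?case
  proof (rule strict_mono_onI)
    fix a b :: nat assume ab: "a \<in> {1..}" "b \<in> {1..}" "a < b"
    have "(f i ^^ n) a < (f i ^^ n) b" using Suc ab by (auto simp: strict_mono_on_def)
    moreover have "(f i ^^ n) a \<ge> 1" using fn_ge[OF assms, of a n] ab by simp
    ultimately show "(f i ^^ Suc n) a < (f i ^^ Suc n) b"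
      using f_mono[OF assms] by (auto simp: strict_mono_on_def)
  qed
qed

lemma fn_inj: assumes "i \<in> {1..N}" shows "inj_on (f i ^^ n) {1..}"
  using strict_mono_on_imp_inj_on[OF fn_mono[OF assms]] .

lemma fn_inj': "i \<in> {1..N} \<Longrightarrow> a \<ge> 1 \<Longrightarrow> b \<ge> 1 \<Longrightarrow> (f i ^^ n) a = (f i ^^ n) b \<Longrightarrow> a = b"
  using fn_inj[of i n] by (auto simp: inj_on_def)

lemma T_pow: "i \<in> {1..N} \<Longrightarrow> m \<ge> 1 \<Longrightarrow>
   (pseudo_shift (f i) (w i) ^^ n) z m = Wprod (f i) (w i) m n * z ((f i ^^ n) m)"
  by (rule shift_pow) (use f_ge in force)+

lemma w_nz: "i \<in> {1..N} \<Longrightarrow> m \<ge> 1 \<Longrightarrow> w i (f i m) \<noteq> 0"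
  using data by (auto simp: pseudo_shift_data_def)

lemma W_nz: assumes "i \<in> {1..N}" "m \<ge> 1" shows "Wprod (f i) (w i) m n \<noteq> 0"
proof -
  have "\<And>\<nu>. \<nu> \<in> {1..n} \<Longrightarrow> w i ((f i ^^ \<nu>) m) \<noteq> 0"
  proof -
    fix \<nu> :: nat assume "\<nu> \<in> {1..n}"
    then obtain k where k: "\<nu> = Suc k" by (cases \<nu>) auto
    have "(f i ^^ \<nu>) m = f i ((f i ^^ k) m)" by (simp add: k)
    moreover have "(f i ^^ k) m \<ge> 1" using fn_ge[OF assms, of k] assms(2) by simp
    ultimately show "w i ((f i ^^ \<nu>) m) \<noteq> 0" using w_nz[OF assms(1)] by simp
  qed
  thus ?thesis unfolding Wprod_def by simp
qed

lemma w_bound: assumes "i \<in> {1..N}" obtains C where "C \<ge> 1" "\<And>m. m \<ge> 1 \<Longrightarrow> norm (w i (f i m)) \<le> C"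
proof -
  have "\<exists>B. \<forall>m\<ge>1. norm (w i (f i m)) \<le> B" using data assms unfolding pseudo_shift_data_def by blast
  then obtain B where "\<forall>m\<ge>1. norm (w i (f i m)) \<le> B" by blast
  thus ?thesis using that[of "max B 1"] by force
qed

lemma W_bound: assumes "i \<in> {1..N}" "m \<ge> 1" "C \<ge> 1" "\<And>m. m \<ge> 1 \<Longrightarrow> norm (w i (f i m)) \<le> C"
  shows "norm (Wprod (f i) (w i) m n) \<le> C ^ n"
proof -
  have "norm (Wprod (f i) (w i) m n) = (\<Prod>\<nu>\<in>{1..n}. norm (w i ((f i ^^ \<nu>) m)))"
    unfolding Wprod_def by (simp add: prod_norm)
  also have "\<dots> \<le> (\<Prod>\<nu>\<in>{1..n}. C)"
  proof (rule prod_mono, safe)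
    fix \<nu> :: nat assume "\<nu> \<in> {1..n}"
    then obtain k where k: "\<nu> = Suc k" by (cases \<nu>) auto
    have "(f i ^^ \<nu>) m = f i ((f i ^^ k) m)" by (simp add: k)
    moreover have "(f i ^^ k) m \<ge> 1" using fn_ge[OF assms(1,2), of k] assms(2) by simp
    ultimately show "norm (w i ((f i ^^ \<nu>) m)) \<le> C" using assms(4) by simp
  qed simp
  finally show ?thesis by simp
qed

end



context PS begin

abbreviation W where "W i m n \<equiv> Wprod (f i) (w i) m n"

definition goodb :: "real \<Rightarrow> nat \<Rightarrow> nat \<Rightarrow> bool" where
  "goodb e M n \<longleftrightarrow> (\<forall>i\<in>{1..N}. \<forall>l\<in>{1..N}. i \<noteq> l \<longrightarrow>
                  (\<forall>m\<in>{1..M}. \<forall>m'. m' \<ge> 1 \<longrightarrow> m' \<notin> {1..M} \<longrightarrow>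
                      (f l ^^ n) m = (f i ^^ n) m' \<longrightarrow>
                      norm (Wprod (f i) (w i) m' n / Wprod (f l) (w l) m n) < e) \<and>
                  (\<forall>m\<in>{1..M}. \<forall>m'\<in>{1..M}.
                      (f l ^^ n) m = (f i ^^ n) m' \<longrightarrow>
                      m = m' \<and>
                      norm (Wprod (f i) (w i) m' n / Wprod (f l) (w l) m n - 1) < e))"

definition good :: "real \<Rightarrow> nat \<Rightarrow> real \<Rightarrow> nat \<Rightarrow> bool" where
  "good e M L n \<longleftrightarrow> (\<forall>i\<in>{1..N}. \<forall>m\<in>{1..M}. norm (W i m n) > L) \<and> goodb e M n"

lemma goodb_mono:
  assumes g: "goodb e M n" and ee: "e \<le> e'" and MM: "M' \<le> M"
  shows "goodb e' M' n"
  unfolding goodb_def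
proof (intro ballI impI)
  fix i l assume il: "i \<in> {1..N}" "l \<in> {1..N}" "i \<noteq> l"
  have G1: "\<And>m m'. m \<in> {1..M} \<Longrightarrow> m' \<ge> 1 \<Longrightarrow> m' \<notin> {1..M} \<Longrightarrow> (f l ^^ n) m = (f i ^^ n) m'
      \<Longrightarrow> norm (W i m' n / W l m n) < e"
    using g il unfolding goodb_def by blast
  have G2: "\<And>m m'. m \<in> {1..M} \<Longrightarrow> m' \<in> {1..M} \<Longrightarrow> (f l ^^ n) m = (f i ^^ n) m'
      \<Longrightarrow> m = m' \<and> norm (W i m' n / W l m n - 1) < e"
    using g il unfolding goodb_def by blast
  have A: "\<forall>m\<in>{1..M'}. \<forall>m'. m' \<ge> 1 \<longrightarrow> m' \<notin> {1..M'} \<longrightarrow> (f l ^^ n) m = (f i ^^ n) m' \<longrightarrow>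
      norm (W i m' n / W l m n) < e'"
  proof (intro ballI allI impI)
    fix m m' assume m: "m \<in> {1..M'}" "m' \<ge> 1" "m' \<notin> {1..M'}" "(f l ^^ n) m = (f i ^^ n) m'"
    have mM: "m \<in> {1..M}" using m MM by auto
    show "norm (W i m' n / W l m n) < e'"
    proof (cases "m' \<in> {1..M}")
      case True
      hence "m = m'" using G2[OF mM True m(4)] by blast
      thus ?thesis using m by auto
    next
      case False
      have "norm (W i m' n / W l m n) < e" by (rule G1[OF mM m(2) False m(4)])
      thus ?thesis using ee by linarith
    qed
  qed
  have B: "\<forall>m\<in>{1..M'}. \<forall>m'\<in>{1..M'}. (f l ^^ n) m = (f i ^^ n) m' \<longrightarrow>
      m = m' \<and> norm (W i m' n / W l m n - 1) < e'"
  proof (intro ballI impI)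
    fix m m' assume m: "m \<in> {1..M'}" "m' \<in> {1..M'}" "(f l ^^ n) m = (f i ^^ n) m'"
    have mM: "m \<in> {1..M}" "m' \<in> {1..M}" using m MM by auto
    show "m = m' \<and> norm (W i m' n / W l m n - 1) < e'" using G2[OF mM m(3)] ee by linarith
  qed
  show "(\<forall>m\<in>{1..M'}. \<forall>m'. m' \<ge> 1 \<longrightarrow> m' \<notin> {1..M'} \<longrightarrow> (f l ^^ n) m = (f i ^^ n) m' \<longrightarrow>
      norm (W i m' n / W l m n) < e') \<and> (\<forall>m\<in>{1..M'}. \<forall>m'\<in>{1..M'}. (f l ^^ n) m = (f i ^^ n) m' \<longrightarrow>
      m = m' \<and> norm (W i m' n / W l m n - 1) < e')" using A B by blast
qed

lemma good_mono:
  assumes "good e M L n" "e \<le> e'" "M' \<le> M" "L' \<le> L"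
  shows "good e' M' L' n"
proof -
  have "\<forall>i\<in>{1..N}. \<forall>m\<in>{1..M'}. norm (W i m n) > L'"
  proof (intro ballI)
    fix i m assume "i \<in> {1..N}" "m \<in> {1..M'}"
    hence "norm (W i m n) > L" using assms(1,3) unfolding good_def by auto
    thus "norm (W i m n) > L'" using assms(4) by linarith
  qed
  moreover have "goodb e' M' n" using assms(1) goodb_mono[OF _ assms(2,3)] unfolding good_def by blast
  ultimately show ?thesis unfolding good_def by blast
qed

definition Qprop where
  "Qprop \<longleftrightarrow> (\<forall>e>0. \<forall>M\<ge>1. \<forall>L. \<forall>B. \<exists>n>B. good e M L n)"

definition SEQ where
  "SEQ nk \<longleftrightarrow> strict_mono nk \<and> (\<forall>k. 0 < nk k) \<and> (\<forall>k. good (1 / (real k + 1)) (k + 1) (real k + 1) (nk k))"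

definition IV where
  "IV \<longleftrightarrow> (\<exists>nk::nat \<Rightarrow> nat. strict_mono nk \<and> (\<forall>k. 0 < nk k) \<and>
              (\<forall>i\<in>{1..N}. \<forall>m\<ge>1.
                  filterlim (\<lambda>k. norm (Wprod (f i) (w i) m (nk k))) at_top sequentially) \<and>
              (\<forall>e>0. \<forall>K M. M \<ge> 1 \<longrightarrow> (\<exists>k\<ge>K. goodb e M (nk k))))"

lemma Q0_Q:
  assumes "\<forall>e>0. \<forall>M\<ge>1. \<forall>L. \<exists>n. good e M L n"
  shows Qprop
  unfolding Qprop_def
proof (intro allI impI)
  fix e :: real and M :: nat and L :: real and B :: nat
  assume e: "e > 0" and M: "M \<ge> 1"
  have i1: "(1::nat) \<in> {1..N}" using N1 by simp
  obtain C where C: "C \<ge> 1" "\<And>m. m \<ge> 1 \<Longrightarrow> norm (w 1 (f 1 m)) \<le> C" using w_bound[OF i1] by blast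
  define C' where "C' = C + 1"
  obtain n where n: "good e M (max L (C' ^ B)) n" using assms e M by blast
  hence g: "good e M L n" by (rule good_mono) auto
  have "norm (W 1 1 n) > C' ^ B" using n M i1 unfolding good_def by fastforce
  moreover have "norm (W 1 1 n) \<le> C ^ n" by (rule W_bound[OF i1 _ C]) auto
  moreover have "C ^ n \<le> C' ^ n" unfolding C'_def by (rule power_mono) (use C in auto)
  ultimately have "C' ^ B < C' ^ n" by linarith
  moreover have "1 < C'" using C C'_def by simp
  ultimately have "B < n" using power_less_imp_less_exp by blast
  thus "\<exists>n>B. good e M L n" using g by blast
qed

lemma Q_SEQ:
  assumes Qprop shows "\<exists>nk. SEQ nk"
proof -
  have "\<forall>k a. \<exists>n>a. good (1 / (real k + 1)) (k + 1) (real k + 1) n"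
    using assms unfolding Qprop_def by (auto intro!: divide_pos_pos)
  then obtain g where g: "\<And>k a. g k a > a \<and> good (1 / (real k + 1)) (k + 1) (real k + 1) (g k a)"
    by metis
  define nk where "nk = rec_nat (g 0 0) (\<lambda>k prev. g (Suc k) prev)"
  have nk0: "nk 0 = g 0 0" and nkS: "\<And>k. nk (Suc k) = g (Suc k) (nk k)" by (simp_all add: nk_def)
  have sm: "strict_mono nk" by (rule strict_mono_Suc_iff[THEN iffD2]) (use g nkS in auto)
  have gd: "\<And>k. good (1 / (real k + 1)) (k + 1) (real k + 1) (nk k)"
  proof -
    fix k show "good (1 / (real k + 1)) (k + 1) (real k + 1) (nk k)"
    proof (cases k)
      case 0 thus ?thesis using g[of 0 0] nk0 by simp
    next
      case (Suc k') thus ?thesis using g[where k="Suc k'" and a="nk k'"] nkS[of k'] by simp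
    qed
  qed
  have pos: "\<And>k. 0 < nk k"
  proof -
    fix k
    have "0 < nk 0" using g nk0 by (metis gr0I not_less0)
    also have "nk 0 \<le> nk k" using sm by (simp add: strict_mono_less_eq)
    finally show "0 < nk k" .
  qed
  show ?thesis using sm gd pos unfolding SEQ_def by blast
qed

lemma SEQ_IV:
  assumes "SEQ nk" shows IV
  unfolding IV_def
proof (intro exI conjI)
  show "strict_mono nk" "\<forall>k. 0 < nk k" using assms unfolding SEQ_def by auto
  show "\<forall>i\<in>{1..N}. \<forall>m\<ge>1. filterlim (\<lambda>k. norm (W i m (nk k))) at_top sequentially"
  proof (intro ballI allI impI)
    fix i m assume i: "i \<in> {1..N}" and m: "(m::nat) \<ge> 1"
    show "filterlim (\<lambda>k. norm (W i m (nk k))) at_top sequentially"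
      unfolding filterlim_at_top
    proof
      fix Z :: real
      obtain k0 :: nat where k0: "Z \<le> real k0" using real_arch_simple by blast
      show "eventually (\<lambda>k. Z \<le> norm (W i m (nk k))) sequentially"
        unfolding eventually_sequentially
      proof (intro exI allI impI)
        fix k assume k: "k \<ge> max k0 m"
        have "good (1 / (real k + 1)) (k + 1) (real k + 1) (nk k)" using assms unfolding SEQ_def by blast
        hence "norm (W i m (nk k)) > real k + 1" using i m k unfolding good_def by auto
        thus "Z \<le> norm (W i m (nk k))" using k k0 by linarith
      qed
    qed
  qed
  show "\<forall>e>0. \<forall>K M. M \<ge> 1 \<longrightarrow> (\<exists>k\<ge>K. goodb e M (nk k))"
  proof (intro allI impI)
    fix e :: real and K M :: nat assume e: "e > 0" and M: "M \<ge> 1"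
    obtain k0 :: nat where k0: "1 / e < real k0" using reals_Archimedean2 by blast
    define k where "k = max k0 (max K M)"
    have "good (1 / (real k + 1)) (k + 1) (real k + 1) (nk k)" using assms unfolding SEQ_def by blast
    moreover have "1 / (real k + 1) \<le> e"
    proof -
      have "1 / e < real k + 1" using k0 unfolding k_def by linarith
      hence "1 < e * (real k + 1)" using e by (simp add: field_simps)
      thus ?thesis using e by (simp add: field_simps)
    qed
    ultimately have "good e M 0 (nk k)" by (rule good_mono) (auto simp: k_def)
    thus "\<exists>k\<ge>K. goodb e M (nk k)" unfolding good_def k_def by (intro exI[of _ k]) (auto simp: k_def)
  qed
qed

lemma IV_Q:
  assumes IV shows Qprop
  unfolding Qprop_def
proof (intro allI impI)
  fix e :: real and M :: nat and L :: real and B :: nat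
  assume e: "e > 0" and M: "M \<ge> 1"
  obtain nk where sm: "strict_mono nk"
    and a: "\<forall>i\<in>{1..N}. \<forall>m\<ge>1. filterlim (\<lambda>k. norm (W i m (nk k))) at_top sequentially"
    and b: "\<forall>e>0. \<forall>K M. M \<ge> 1 \<longrightarrow> (\<exists>k\<ge>K. goodb e M (nk k))"
    using assms unfolding IV_def by blast
  have "\<forall>i\<in>{1..N}. eventually (\<lambda>k. \<forall>m\<in>{1..M}. L + 1 \<le> norm (W i m (nk k))) sequentially"
  proof
    fix i assume i: "i \<in> {1..N}"
    show "eventually (\<lambda>k. \<forall>m\<in>{1..M}. L + 1 \<le> norm (W i m (nk k))) sequentially"
      by (rule eventually_ball_finite) (use a i in \<open>auto simp: filterlim_at_top\<close>)
  qed
  hence "eventually (\<lambda>k. \<forall>i\<in>{1..N}. \<forall>m\<in>{1..M}. L + 1 \<le> norm (W i m (nk k))) sequentially"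
    by (rule eventually_ball_finite[rotated]) simp
  then obtain K0 where K0: "\<And>k. k \<ge> K0 \<Longrightarrow> \<forall>i\<in>{1..N}. \<forall>m\<in>{1..M}. L + 1 \<le> norm (W i m (nk k))"
    unfolding eventually_sequentially by blast
  obtain k where k: "k \<ge> max K0 (Suc B)" "goodb e M (nk k)" using b e M by blast
  have "nk k \<ge> k" using seq_suble[OF sm] by simp
  hence "nk k > B" using k by simp
  moreover have "good e M L (nk k)" unfolding good_def
  proof
    show "\<forall>i\<in>{1..N}. \<forall>m\<in>{1..M}. L < norm (W i m (nk k))"
    proof (intro ballI)
      fix i m assume "i \<in> {1..N}" "m \<in> {1..M}"
      hence "L + 1 \<le> norm (W i m (nk k))" using K0[of k] k(1) by auto
      thus "L < norm (W i m (nk k))" by linarith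
    qed
  qed (rule k(2))
  ultimately show "\<exists>n>B. good e M L n" by blast
qed

end



lemma near1:
  fixes P :: "'k::real_normed_field"
  assumes "norm (P - 1) < \<eta>" shows "norm P > 1 - \<eta>"
proof -
  have "norm (1::'k) \<le> norm P + norm (1 - P)" using norm_triangle_ineq[of P "1 - P"] by simp
  moreover have "norm (1 - P) = norm (P - 1)" by (rule norm_minus_commute)
  ultimately show ?thesis using assms by simp
qed

lemma norm_of_nat_diff: "norm (of_nat a - of_nat b :: 'k::real_normed_field) = \<bar>real a - real b\<bar>"
proof -
  have "(of_nat a - of_nat b :: 'k) = of_int (int a - int b)" by simp
  hence "norm (of_nat a - of_nat b :: 'k) = \<bar>of_int (int a - int b)\<bar>" by (simp only: norm_of_int)
  thus ?thesis by simp
qed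

context PS begin

lemma extract_good:
  fixes a b :: "nat \<Rightarrow> 'k" and e \<eta> L :: real and M n :: nat
  assumes e: "e > 0" and eta: "\<eta> > 0" "\<eta> * (max L 0 + 1) \<le> 1" "\<eta> \<le> e / 4" "\<eta> \<le> 1/2"
      "\<eta> * (8 * (real M + 1)) \<le> 1"
    and small: "\<And>j. norm (a j) < \<eta>"
    and A: "\<And>i m. i \<in> {1..N} \<Longrightarrow> m \<ge> 1 \<Longrightarrow>
       norm (W i m n * a ((f i ^^ n) m) - (if m \<in> {1..M} then 1 else 0)) < \<eta>"
    and B: "\<And>i m. i \<in> {1..N} \<Longrightarrow> m \<ge> 1 \<Longrightarrow>
       norm (W i m n * b ((f i ^^ n) m) - (if m \<in> {1..M} then of_nat m else 0)) < \<eta>"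
  shows "good e M L n"
  unfolding good_def goodb_def
proof (intro conjI ballI impI allI)
  fix i m assume i: "i \<in> {1..N}" and m: "m \<in> {1..M}"
  define P where "P = W i m n * a ((f i ^^ n) m)"
  have "norm (P - 1) < \<eta>" using A[OF i, of m] m unfolding P_def by auto
  hence P1: "norm P > 1 - \<eta>" by (rule near1)
  have "norm P = norm (W i m n) * norm (a ((f i ^^ n) m))" unfolding P_def by (simp add: norm_mult)
  also have "\<dots> \<le> norm (W i m n) * \<eta>" by (rule mult_left_mono) (use small[of "(f i ^^ n) m"] in auto)
  finally have "norm (W i m n) * \<eta> > 1 - \<eta>" using P1 by linarith
  moreover have "1 - \<eta> \<ge> max L 0 * \<eta>" using eta(2) by (simp add: algebra_simps)
  ultimately have "norm (W i m n) * \<eta> > max L 0 * \<eta>" by linarith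
  hence "norm (W i m n) > max L 0" using eta(1) by (simp add: mult_less_cancel_right)
  thus "L < norm (W i m n)" by linarith
next
  fix i l assume i: "i \<in> {1..N}" and l: "l \<in> {1..N}" and il: "i \<noteq> l"
  {
    fix m m' assume m: "m \<in> {1..M}" and m'1: "m' \<ge> 1" and m'M: "m' \<notin> {1..M}"
      and eq: "(f l ^^ n) m = (f i ^^ n) m'"
    define j where "j = (f l ^^ n) m"
    define P where "P = W l m n * a j"
    define Q where "Q = W i m' n * a j"
    have "norm (P - 1) < \<eta>" using A[OF l, of m] m unfolding P_def j_def by auto
    hence P1: "norm P > 1 - \<eta>" by (rule near1)
    have Q1: "norm Q < \<eta>" using A[OF i m'1] m'M unfolding Q_def j_def eq by auto
    have Pnz: "P \<noteq> 0" using P1 eta by auto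
    hence aj: "a j \<noteq> 0" unfolding P_def by auto
    have "W i m' n / W l m n = Q / P" unfolding P_def Q_def using aj by simp
    hence "norm (W i m' n / W l m n) = norm Q / norm P" by (simp add: norm_divide)
    also have "\<dots> < \<eta> / (1/2)"
      by (rule frac_less) (use Q1 P1 eta in auto)
    also have "\<dots> \<le> e" using eta by simp
    finally show "norm (W i m' n / W l m n) < e" .
  }
  {
    fix m m' assume m: "m \<in> {1..M}" and m': "m' \<in> {1..M}" and eq: "(f l ^^ n) m = (f i ^^ n) m'"
    define j where "j = (f l ^^ n) m"
    define P where "P = W l m n * a j"
    define Q where "Q = W i m' n * a j"
    have "norm (P - 1) < \<eta>" using A[OF l, of m] m unfolding P_def j_def by auto
    hence P1: "norm P > 1 - \<eta>" by (rule near1)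
    have Q1: "norm (Q - 1) < \<eta>" using A[OF i, of m'] m' unfolding Q_def j_def eq by auto
    have Pnz: "P \<noteq> 0" using P1 eta by auto
    hence aj: "a j \<noteq> 0" unfolding P_def by auto
    have Wl: "W l m n \<noteq> 0" using W_nz[OF l] m by auto
    define \<rho> where "\<rho> = W i m' n / W l m n"
    have "\<rho> = Q / P" unfolding P_def Q_def \<rho>_def using aj by simp
    hence "\<rho> - 1 = (Q - P) / P" using Pnz by (simp add: field_simps)
    hence "norm (\<rho> - 1) = norm (Q - P) / norm P" by (simp add: norm_divide)
    also have "norm (Q - P) < 2 * \<eta>"
    proof -
      have "norm (Q - P) \<le> norm (Q - 1) + norm (P - 1)"
        using norm_triangle_ineq4[of "Q - 1" "P - 1"] by simp
      thus ?thesis using Q1 \<open>norm (P - 1) < \<eta>\<close> by linarith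
    qed
    hence "norm (Q - P) / norm P < (2 * \<eta>) / (1/2)"
      by (intro frac_less) (use P1 eta in auto)
    finally have r1: "norm (\<rho> - 1) < 4 * \<eta>" by simp
    thus "norm (W i m' n / W l m n - 1) < e" unfolding \<rho>_def using eta by linarith
    define P' where "P' = W l m n * b j"
    define Q' where "Q' = W i m' n * b j"
    have P'1: "norm (P' - of_nat m) < \<eta>" using B[OF l, of m] m unfolding P'_def j_def by auto
    have Q'1: "norm (Q' - of_nat m') < \<eta>" using B[OF i, of m'] m' unfolding Q'_def j_def eq by auto
    have QP: "Q' = \<rho> * P'" unfolding Q'_def P'_def \<rho>_def using Wl by simp
    have decomp: "(of_nat m' - of_nat m :: 'k) = (of_nat m' - Q') + \<rho> * (P' - of_nat m) + (\<rho> - 1) * of_nat m"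
      unfolding QP by (simp add: algebra_simps)
    have nr: "norm \<rho> \<le> 3"
    proof -
      have "norm \<rho> \<le> norm (\<rho> - 1) + norm (1::'k)" using norm_triangle_ineq[of "\<rho> - 1" 1] by simp
      thus ?thesis using r1 eta by simp
    qed
    have "norm (of_nat m' - of_nat m :: 'k) \<le> norm (of_nat m' - Q') + norm (\<rho> * (P' - of_nat m)) + norm ((\<rho> - 1) * of_nat m)"
      unfolding decomp using norm_triangle_ineq[of "(of_nat m' - Q') + \<rho> * (P' - of_nat m)" "(\<rho> - 1) * of_nat m"]
        norm_triangle_ineq[of "of_nat m' - Q'" "\<rho> * (P' - of_nat m)"] by linarith
    also have "norm (\<rho> * (P' - of_nat m)) \<le> 3 * \<eta>"
      unfolding norm_mult by (rule mult_mono) (use nr P'1 in auto)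
    also have "norm ((\<rho> - 1) * of_nat m) \<le> 4 * \<eta> * real M"
      unfolding norm_mult norm_of_nat by (rule mult_mono) (use r1 m eta(1) in auto)
    also have "norm (of_nat m' - Q') < \<eta>" using Q'1 by (simp add: norm_minus_commute)
    finally have "norm (of_nat m' - of_nat m :: 'k) < \<eta> + 3 * \<eta> + 4 * \<eta> * real M" by simp
    also have "\<dots> \<le> 1/2" using eta(5) by (simp add: algebra_simps)
    finally have "\<bar>real m' - real m\<bar> < 1/2" unfolding norm_of_nat_diff .
    thus "m = m'" by linarith
  }
qed

end



lemma lp_diff_summable:
  assumes "a \<in> lp_space p" "b \<in> lp_space p" "p > 0"
  shows "summable (\<lambda>m. norm (a m - b m) powr p)"
proof -
  have sb: "summable (\<lambda>m. norm (- b m) powr p)" using assms(2) by (simp add: lp_space_def)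
  have "summable (\<lambda>m. norm (a m + - b m) powr p)"
    by (rule lp_add(1)[OF assms(3) _ sb]) (use assms(1) in \<open>simp add: lp_space_def\<close>)
  thus ?thesis by simp
qed

lemma lp_dist_psum: "lp_dist p x y = psum p (\<lambda>m. x m - y m) powr (1/p)"
  unfolding lp_dist_def psum_def by simp

lemma coord_dist:
  assumes "a \<in> lp_space p" "b \<in> lp_space p" "p > 0"
  shows "norm (a m - b m) \<le> lp_dist p a b"
  unfolding lp_dist_psum by (rule coord_le[OF assms(3) lp_diff_summable[OF assms]])

lemma lp_dist_nonneg: "lp_dist p a b \<ge> 0"
  unfolding lp_dist_def by simp

lemma lp_zero: "(0 :: nat \<Rightarrow> 'k::real_normed_vector) \<in> lp_space p"
  unfolding lp_space_def by simp

lemma lp_finite: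
  assumes "finite E" "\<And>m. m \<notin> E \<Longrightarrow> x m = 0" "x 0 = 0" "p > 0"
  shows "x \<in> lp_space p"
  using psum_finite(1)[OF assms(1,2,4)] assms(3) unfolding lp_space_def by simp

lemma lp_add_mem:
  assumes "a \<in> lp_space p" "b \<in> lp_space p" "p > 0"
  shows "(\<lambda>m. a m + b m) \<in> lp_space p"
  using lp_add(1)[OF assms(3), of a b] assms unfolding lp_space_def by simp

lemma lp_scale_mem:
  fixes a :: "nat \<Rightarrow> 'k::real_normed_vector"
  assumes "a \<in> lp_space p" "p > 0"
  shows "(\<lambda>m. c *\<^sub>R a m) \<in> lp_space p"
proof -
  have s: "summable (\<lambda>m. norm (a m) powr p)" using assms by (simp add: lp_space_def)
  have "summable (\<lambda>m. \<bar>c\<bar> powr p * norm (a m) powr p)" by (rule summable_mult[OF s])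
  moreover have "\<And>m. norm (c *\<^sub>R a m) powr p = \<bar>c\<bar> powr p * norm (a m) powr p"
    by (simp add: powr_mult)
  ultimately show ?thesis using assms unfolding lp_space_def by simp
qed

lemma lp_sum_mem:
  fixes g :: "nat \<Rightarrow> nat \<Rightarrow> 'k::real_normed_vector"
  assumes "finite I" "\<And>j. j \<in> I \<Longrightarrow> g j \<in> lp_space p" "p > 0"
  shows "(\<lambda>m. \<Sum>j\<in>I. g j m) \<in> lp_space p"
  using assms
proof (induction I rule: finite_induct)
  case empty thus ?case using lp_zero by (simp add: zero_fun_def)
next
  case (insert x F)
  have "(\<lambda>m. g x m + (\<Sum>j\<in>F. g j m)) \<in> lp_space p"
    by (rule lp_add_mem) (use insert in auto)
  thus ?case using insert by simp
qed

lemma dsum_coord: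
  assumes "u \<in> dsum_carrier R (lp_space p)" "v \<in> dsum_carrier R (lp_space p)" "r \<in> {1..R}" "p > 0"
  shows "norm (u r m - v r m) \<le> dsum_dist R (lp_dist p) u v"
proof -
  have "norm (u r m - v r m) \<le> lp_dist p (u r) (v r)"
    by (rule coord_dist) (use assms in \<open>auto simp: dsum_carrier_def\<close>)
  also have "\<dots> \<le> dsum_dist R (lp_dist p) u v"
    unfolding dsum_dist_def by (rule member_le_sum) (use assms lp_dist_nonneg in auto)
  finally show ?thesis .
qed

lemma dsum_pow:
  assumes "x \<in> dsum_carrier R X"
  shows "(dsum_op R S ^^ n) x = (\<lambda>r. if r \<in> {1..R} then (S ^^ n) (x r) else 0)"
proof (induction n)
  case 0 thus ?case using assms by (auto simp: dsum_carrier_def)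
next
  case (Suc n) thus ?case by (auto simp: dsum_op_def)
qed

lemma dsum_pow_mem:
  assumes "x \<in> dsum_carrier R X" "\<And>y. y \<in> X \<Longrightarrow> S y \<in> X"
  shows "(dsum_op R S ^^ n) x \<in> dsum_carrier R X"
proof -
  have "\<And>y. y \<in> X \<Longrightarrow> (S ^^ n) y \<in> X"
  proof -
    fix y assume "y \<in> X" thus "(S ^^ n) y \<in> X" by (induction n) (auto simp: assms(2))
  qed
  thus ?thesis using assms(1) unfolding dsum_pow[OF assms(1)] by (auto simp: dsum_carrier_def)
qed

lemma eta_exists:
  assumes "e > 0"
  shows "\<exists>\<eta>::real. \<eta> > 0 \<and> \<eta> * (max L 0 + 1) \<le> 1 \<and> \<eta> \<le> e / 4 \<and> \<eta> \<le> 1/2 \<and> \<eta> * (8 * (real M + 1)) \<le> 1"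
proof -
  define \<eta> where "\<eta> = min (1 / (max L 0 + 1)) (min (e/4) (min (1/2) (1 / (8 * (real M + 1)))))"
  have p1: "max L 0 + 1 > 0" by simp
  have p2: "8 * (real M + 1) > 0" by simp
  have "\<eta> > 0" unfolding \<eta>_def using assms by auto
  moreover have "\<eta> * (max L 0 + 1) \<le> 1"
  proof -
    have "\<eta> \<le> 1 / (max L 0 + 1)" unfolding \<eta>_def by linarith
    thus ?thesis using p1 by (simp add: field_simps)
  qed
  moreover have "\<eta> * (8 * (real M + 1)) \<le> 1"
  proof -
    have "\<eta> \<le> 1 / (8 * (real M + 1))" unfolding \<eta>_def by linarith
    thus ?thesis using p2 by (simp add: field_simps)
  qed
  moreover have "\<eta> \<le> e / 4" "\<eta> \<le> 1/2" unfolding \<eta>_def by linarith+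
  ultimately show ?thesis by blast
qed

context PS begin

lemma T_lp:
  assumes i: "i \<in> {1..N}" and z: "z \<in> lp_space p"
  shows "pseudo_shift (f i) (w i) z \<in> lp_space p"
proof -
  obtain C where C: "C \<ge> 1" "\<And>m. m \<ge> 1 \<Longrightarrow> norm (w i (f i m)) \<le> C" using w_bound[OF i] by blast
  have sz: "summable (\<lambda>m. norm (z m) powr p)" using z by (simp add: lp_space_def)
  define g where "g m = (if m = 0 then 0 else norm (z (f i m)) powr p)" for m
  have sg: "summable g"
  proof (rule bounded_imp_summable)
    show "\<And>n. 0 \<le> g n" unfolding g_def by auto
    fix n
    have "(\<Sum>k\<le>n. g k) = (\<Sum>k\<in>{1..n}. norm (z (f i k)) powr p)"
    proof -
      have "(\<Sum>k\<le>n. g k) = (\<Sum>k\<in>{1..n}. g k)"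
        by (rule sum.mono_neutral_right) (auto simp: g_def)
      thus ?thesis by (simp add: g_def)
    qed
    also have "\<dots> = (\<Sum>j\<in>f i ` {1..n}. norm (z j) powr p)"
    proof -
      have "inj_on (f i) {1..n}" using strict_mono_on_imp_inj_on[OF f_mono[OF i]] by (rule inj_on_subset) auto
      thus ?thesis by (simp add: sum.reindex)
    qed
    also have "\<dots> \<le> (\<Sum>m. norm (z m) powr p)" by (rule sum_le_suminf[OF sz]) auto
    finally show "(\<Sum>k\<le>n. g k) \<le> (\<Sum>m. norm (z m) powr p)" .
  qed
  have "summable (\<lambda>m. norm (pseudo_shift (f i) (w i) z m) powr p)"
  proof (rule summable_comparison_test'[OF summable_mult[OF sg, of "C powr p"], of 0])
    fix m :: nat
    show "norm (norm (pseudo_shift (f i) (w i) z m) powr p) \<le> C powr p * g m"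
    proof (cases "m = 0")
      case True thus ?thesis by (simp add: pseudo_shift_def g_def)
    next
      case False
      have "norm (pseudo_shift (f i) (w i) z m) = norm (w i (f i m)) * norm (z (f i m))"
        using False by (simp add: pseudo_shift_def norm_mult)
      also have "\<dots> \<le> C * norm (z (f i m))" by (rule mult_right_mono) (use C False in auto)
      finally have "norm (pseudo_shift (f i) (w i) z m) powr p \<le> (C * norm (z (f i m))) powr p"
        using p0 by (intro powr_mono2) auto
      also have "\<dots> = C powr p * norm (z (f i m)) powr p" using C by (simp add: powr_mult)
      finally show ?thesis using False by (simp add: g_def)
    qed
  qed
  thus ?thesis unfolding lp_space_def by (simp add: pseudo_shift_def)
qed

lemma Tn_lp:
  assumes i: "i \<in> {1..N}" and z: "z \<in> lp_space p"
  shows "(pseudo_shift (f i) (w i) ^^ n) z \<in> lp_space p"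
  by (induction n) (use T_lp[OF i] z in auto)

definition x1 :: "nat \<Rightarrow> nat \<Rightarrow> 'k" where "x1 M m = (if m \<in> {1..M} then 1 else 0)"
definition x2 :: "nat \<Rightarrow> nat \<Rightarrow> 'k" where "x2 M m = (if m \<in> {1..M} then of_nat m else 0)"

lemma x1_lp: "x1 M \<in> lp_space p"
  by (rule lp_finite[of "{1..M}"]) (auto simp: x1_def p0)
lemma x2_lp: "x2 M \<in> lp_space p"
  by (rule lp_finite[of "{1..M}"]) (auto simp: x2_def p0)

end



context PS begin

abbreviation T where "T i \<equiv> pseudo_shift (f i) (w i)"

definition XP :: "nat \<Rightarrow> nat \<Rightarrow> nat \<Rightarrow> 'k" where
  "XP M = (\<lambda>r. if r = 1 then x1 M else if r = 2 then x2 M else 0)"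

lemma XP_mem: "XP M \<in> dsum_carrier 2 (lp_space p)"
  unfolding XP_def dsum_carrier_def using x1_lp x2_lp by auto

lemma zero_mem: "(0 :: nat \<Rightarrow> nat \<Rightarrow> 'k) \<in> dsum_carrier 2 (lp_space p)"
  unfolding dsum_carrier_def using lp_zero by (auto simp: zero_fun_def)

lemma XP_1: "XP M 1 = x1 M" and XP_2: "XP M 2 = x2 M" by (auto simp: XP_def)

lemma Q0_from_coords:
  assumes e: "e > 0"
    and H: "\<And>\<eta>. \<eta> > 0 \<Longrightarrow> \<exists>n a b. (\<forall>j. norm (a j) < \<eta>) \<and>
         (\<forall>i\<in>{1..N}. \<forall>m\<ge>1. norm (W i m n * a ((f i ^^ n) m) - x1 M m) < \<eta>) \<and>
         (\<forall>i\<in>{1..N}. \<forall>m\<ge>1. norm (W i m n * b ((f i ^^ n) m) - x2 M m) < \<eta>)"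
  shows "\<exists>n. good e M L n"
proof -
  obtain \<eta> :: real where eta: "\<eta> > 0" "\<eta> * (max L 0 + 1) \<le> 1" "\<eta> \<le> e / 4" "\<eta> \<le> 1/2"
      "\<eta> * (8 * (real M + 1)) \<le> 1" using eta_exists[OF e] by blast
  obtain n a b where nab: "\<forall>j. norm (a j) < \<eta>"
    "\<forall>i\<in>{1..N}. \<forall>m\<ge>1. norm (W i m n * a ((f i ^^ n) m) - x1 M m) < \<eta>"
    "\<forall>i\<in>{1..N}. \<forall>m\<ge>1. norm (W i m n * b ((f i ^^ n) m) - x2 M m) < \<eta>"
    using H[OF eta(1)] by blast
  have "good e M L n"
    by (rule extract_good[OF e eta, of a n b]) (use nab in \<open>auto simp: x1_def x2_def\<close>)
  thus ?thesis by blast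
qed

lemma WM_Q0:
  assumes WM: "s_weakly_mixing (lp_space p) (lp_dist p) N T"
  shows "\<forall>e>0. \<forall>M\<ge>1. \<forall>L. \<exists>n. good e M L n"
proof (intro allI impI)
  fix e :: real and M :: nat and L :: real assume e: "e > 0" and M: "M \<ge> 1"
  show "\<exists>n. good e M L n"
  proof (rule Q0_from_coords[OF e])
    fix \<eta> :: real assume eta: "\<eta> > 0"
    define CR where "CR = dsum_carrier 2 (lp_space p :: (nat \<Rightarrow> 'k) set)"
    define SB where "SB X = {u \<in> CR. \<exists>\<eta>'<\<eta>. \<forall>r\<in>{1..2}. \<forall>m. norm (u r m - X r m) \<le> \<eta>'}" for X :: "nat \<Rightarrow> nat \<Rightarrow> 'k"
    have opn: "open_in_ms CR (dsum_dist 2 (lp_dist p)) (SB X)" for X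
      unfolding open_in_ms_def
    proof (intro conjI ballI)
      show "SB X \<subseteq> CR" unfolding SB_def by auto
      fix u assume u: "u \<in> SB X"
      then obtain \<eta>' where e': "\<eta>' < \<eta>" "\<forall>r\<in>{1..2}. \<forall>m. norm (u r m - X r m) \<le> \<eta>'" and uC: "u \<in> CR"
        unfolding SB_def by blast
      show "\<exists>e>0. \<forall>y\<in>CR. dsum_dist 2 (lp_dist p) u y < e \<longrightarrow> y \<in> SB X"
      proof (intro exI conjI ballI impI)
        show "\<eta> - \<eta>' > 0" using e' by simp
        fix y assume yC: "y \<in> CR" and d: "dsum_dist 2 (lp_dist p) u y < \<eta> - \<eta>'"
        have "\<forall>r\<in>{1..2}. \<forall>m. norm (y r m - X r m) \<le> \<eta>' + dsum_dist 2 (lp_dist p) u y"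
        proof (intro ballI allI)
          fix r m assume r: "r \<in> {1..2::nat}"
          have "norm (y r m - X r m) \<le> norm (u r m - X r m) + norm (u r m - y r m)"
            using norm_triangle_ineq4[of "u r m - X r m" "u r m - y r m"] by simp
          also have "norm (u r m - y r m) \<le> dsum_dist 2 (lp_dist p) u y"
            by (rule dsum_coord) (use uC yC r p0 CR_def in auto)
          moreover have "norm (u r m - X r m) \<le> \<eta>'" using e' r by blast
          ultimately show "norm (y r m - X r m) \<le> \<eta>' + dsum_dist 2 (lp_dist p) u y" by linarith
        qed
        moreover have "\<eta>' + dsum_dist 2 (lp_dist p) u y < \<eta>" using d by simp
        ultimately show "y \<in> SB X" unfolding SB_def using yC by blast
      qed
    qed
    have ne: "X \<in> SB X" if "X \<in> CR" for X
      unfolding SB_def using that eta by auto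
    obtain n y where n: "n \<ge> 1" and yV: "y \<in> SB 0"
      and yU: "\<forall>i\<in>{1..N}. (dsum_op 2 (T i) ^^ n) y \<in> SB (XP M)"
    proof -
      have U: "SB (XP M) \<noteq> {}" using ne[of "XP M"] XP_mem unfolding CR_def by blast
      have V: "SB 0 \<noteq> {}" using ne[of 0] zero_mem unfolding CR_def by blast
      have "\<exists>n\<ge>1. \<exists>y\<in>SB 0. \<forall>i\<in>{1..N}. ((\<lambda>i. dsum_op 2 (T i)) i ^^ n) y \<in> SB (XP M)"
        using WM[unfolded s_weakly_mixing_def s_top_transitive_def CR_def[symmetric], rule_format,
            OF opn opn U V] .
      thus ?thesis using that by blast
    qed
    have yC: "y \<in> CR" and ysmall: "\<forall>j. norm (y 1 j) < \<eta>"
    proof -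
      show "y \<in> CR" using yV unfolding SB_def by blast
      obtain \<eta>' where h: "\<eta>' < \<eta>" "\<forall>r\<in>{1..2}. \<forall>m. norm (y r m - 0 r m) \<le> \<eta>'"
        using yV unfolding SB_def by blast
      show "\<forall>j. norm (y 1 j) < \<eta>"
      proof
        fix j
        have "norm (y 1 j - 0 1 j) \<le> \<eta>'" using h(2) by simp
        thus "norm (y 1 j) < \<eta>" using h(1) by simp
      qed
    qed
    have coordU: "norm (W i m n * y r ((f i ^^ n) m) - XP M r m) < \<eta>"
      if i: "i \<in> {1..N}" and m: "m \<ge> 1" and r: "r \<in> {1..2}" for i m r
    proof -
      obtain \<eta>' where e': "\<eta>' < \<eta>" "\<forall>r\<in>{1..2}. \<forall>m. norm ((dsum_op 2 (T i) ^^ n) y r m - XP M r m) \<le> \<eta>'"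
        using yU i unfolding SB_def by blast
      have "(dsum_op 2 (T i) ^^ n) y r m = W i m n * y r ((f i ^^ n) m)"
        using dsum_pow[where x=y and R=2 and X="lp_space p" and S="T i" and n=n] yC r T_pow[OF i m] unfolding CR_def by simp
      moreover have "norm ((dsum_op 2 (T i) ^^ n) y r m - XP M r m) \<le> \<eta>'" using e' r by blast
      ultimately show ?thesis using e'(1) by simp
    qed
    show "\<exists>n a b. (\<forall>j. norm (a j) < \<eta>) \<and>
         (\<forall>i\<in>{1..N}. \<forall>m\<ge>1. norm (W i m n * a ((f i ^^ n) m) - x1 M m) < \<eta>) \<and>
         (\<forall>i\<in>{1..N}. \<forall>m\<ge>1. norm (W i m n * b ((f i ^^ n) m) - x2 M m) < \<eta>)"
      apply (rule exI[of _ n], rule exI[of _ "y 1"], rule exI[of _ "y 2"]) using ysmall coordU[of _ _ 1] coordU[of _ _ 2] by (auto simp: XP_def)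
  qed
qed

end



lemma conv_hull_coord:
  fixes wv :: "nat \<Rightarrow> nat \<Rightarrow> 'k::real_normed_vector"
  assumes h: "in_conv_hull N wv Y" and lp: "\<And>j. j \<in> {1..N} \<Longrightarrow> wv j \<in> lp_space p" and p: "p > 0"
    and D: "\<And>j m. j \<in> {1..N} \<Longrightarrow> norm (wv j m - x m) \<le> D"
  shows "Y \<in> lp_space p" "norm (Y m - x m) \<le> D"
proof -
  obtain c where c: "\<forall>j\<in>{1..N}. 0 \<le> c j" "(\<Sum>j\<in>{1..N}. c j) = 1"
    and Y: "Y = (\<lambda>a. \<Sum>j\<in>{1..N}. c j *\<^sub>R wv j a)"
    using h unfolding in_conv_hull_def by blast
  show "Y \<in> lp_space p" unfolding Y
    by (rule lp_sum_mem) (use lp_scale_mem lp p in auto)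
  have "Y m - x m = (\<Sum>j\<in>{1..N}. c j *\<^sub>R (wv j m - x m))"
  proof -
    have "(\<Sum>j\<in>{1..N}. c j *\<^sub>R x m) = x m" using c(2) by (simp add: scaleR_sum_left[symmetric])
    thus ?thesis unfolding Y by (simp add: scaleR_diff_right sum_subtractf)
  qed
  hence "norm (Y m - x m) \<le> (\<Sum>j\<in>{1..N}. norm (c j *\<^sub>R (wv j m - x m)))"
    using norm_sum by metis
  also have "\<dots> \<le> (\<Sum>j\<in>{1..N}. c j * D)"
  proof (rule sum_mono)
    fix j assume j: "j \<in> {1..N}"
    have "norm (c j *\<^sub>R (wv j m - x m)) = c j * norm (wv j m - x m)" using c(1) j by simp
    also have "\<dots> \<le> c j * D" by (rule mult_left_mono) (use c(1) D j in auto)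
    finally show "norm (c j *\<^sub>R (wv j m - x m)) \<le> c j * D" .
  qed
  also have "\<dots> = D" using c(2) by (simp add: sum_distrib_right[symmetric])
  finally show "norm (Y m - x m) \<le> D" .
qed

context PS begin

lemma BC_Q0:
  assumes BC: "sim_bc_criterion (dsum_carrier 2 (lp_space p)) (dsum_dist 2 (lp_dist p)) N (\<lambda>i. dsum_op 2 (T i))"
  shows "\<forall>e>0. \<forall>M\<ge>1. \<forall>L. \<exists>n. good e M L n"
proof (intro allI impI)
  fix e :: real and M :: nat and L :: real assume e: "e > 0" and M: "M \<ge> 1"
  define CR where "CR = dsum_carrier 2 (lp_space p :: (nat \<Rightarrow> 'k) set)"
  define d where "d = dsum_dist 2 (lp_dist p :: (nat \<Rightarrow> 'k) \<Rightarrow> _)"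
  obtain nk Y0 Sk where dense: "dense_in_ms CR d Y0" and Skm: "\<forall>k. \<forall>y\<in>Y0. Sk k y \<in> CR"
    and bc: "\<forall>e>0. \<forall>K::nat. \<forall>y0\<in>Y0. \<exists>k\<ge>K. d (Sk k y0) 0 < e \<and>
            (\<forall>i\<in>{1..N}. d ((dsum_op 2 (T i) ^^ nk k) (Sk k y0)) y0 < e)"
    using BC unfolding sim_bc_criterion_def CR_def[symmetric] d_def[symmetric] by (elim exE conjE) blast
  show "\<exists>n. good e M L n"
  proof (rule Q0_from_coords[OF e])
    fix \<eta> :: real assume eta: "\<eta> > 0"
    have dd: "\<forall>x\<in>CR. \<forall>e>0. \<exists>a\<in>Y0. d x a < e" using dense unfolding dense_in_ms_def by blast
    have XC: "XP M \<in> CR" using XP_mem unfolding CR_def .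
    obtain y0 where y0: "y0 \<in> Y0" "d (XP M) y0 < \<eta>/2"
      using dd XC half_gt_zero[OF eta] by blast
    have y0C: "y0 \<in> CR" using dense y0 unfolding dense_in_ms_def by blast
    obtain k where k: "d (Sk k y0) 0 < \<eta>/2" "\<forall>i\<in>{1..N}. d ((dsum_op 2 (T i) ^^ nk k) (Sk k y0)) y0 < \<eta>/2"
      using bc y0(1) half_gt_zero[OF eta] by blast
    define z where "z = Sk k y0"
    have zC: "z \<in> CR" using Skm y0 unfolding z_def by blast
    have zs: "\<forall>j. norm (z 1 j) < \<eta>"
    proof
      fix j
      have "norm (z 1 j - 0 1 j) \<le> d z 0"
        using dsum_coord[where u=z and v=0 and R=2 and r=1 and m=j and p=p] zC zero_mem p0
        unfolding d_def CR_def by simp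
      thus "norm (z 1 j) < \<eta>" using k(1) eta unfolding z_def by simp
    qed
    have co: "norm (W i m (nk k) * z r ((f i ^^ nk k) m) - XP M r m) < \<eta>"
      if i: "i \<in> {1..N}" and m: "m \<ge> 1" and r: "r \<in> {1..2}" for i m r
    proof -
      have TzC: "(dsum_op 2 (T i) ^^ nk k) z \<in> CR"
        unfolding CR_def by (rule dsum_pow_mem) (use zC T_lp[OF i] CR_def in auto)
      have eq: "(dsum_op 2 (T i) ^^ nk k) z r m = W i m (nk k) * z r ((f i ^^ nk k) m)"
        using dsum_pow[where x=z and R=2 and X="lp_space p" and S="T i" and n="nk k"] zC r T_pow[OF i m]
        unfolding CR_def by simp
      have t1: "norm ((dsum_op 2 (T i) ^^ nk k) z r m - XP M r m) \<le>
          norm ((dsum_op 2 (T i) ^^ nk k) z r m - y0 r m) + norm (y0 r m - XP M r m)"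
        by (rule norm_diff_triangle_le[OF order_refl order_refl])
      have t2: "norm ((dsum_op 2 (T i) ^^ nk k) z r m - y0 r m) \<le> d ((dsum_op 2 (T i) ^^ nk k) z) y0"
        unfolding d_def by (rule dsum_coord) (use TzC y0C r p0 CR_def in auto)
      have t3: "norm (y0 r m - XP M r m) \<le> d y0 (XP M)"
        unfolding d_def by (rule dsum_coord) (use XP_mem y0C r p0 CR_def in auto)
      have t4: "d y0 (XP M) = d (XP M) y0"
        unfolding d_def dsum_dist_def lp_dist_def by (simp add: norm_minus_commute)
      have "norm ((dsum_op 2 (T i) ^^ nk k) z r m - XP M r m)
          \<le> d ((dsum_op 2 (T i) ^^ nk k) z) y0 + d (XP M) y0" using t1 t2 t3 t4 by linarith
      moreover have "d ((dsum_op 2 (T i) ^^ nk k) z) y0 < \<eta>/2" using k(2) i unfolding z_def by blast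
      ultimately show ?thesis using y0(2) unfolding eq by linarith
    qed
    show "\<exists>n a b. (\<forall>j. norm (a j) < \<eta>) \<and>
         (\<forall>i\<in>{1..N}. \<forall>m\<ge>1. norm (W i m n * a ((f i ^^ n) m) - x1 M m) < \<eta>) \<and>
         (\<forall>i\<in>{1..N}. \<forall>m\<ge>1. norm (W i m n * b ((f i ^^ n) m) - x2 M m) < \<eta>)"
      apply (rule exI[of _ "nk k"], rule exI[of _ "z 1"], rule exI[of _ "z 2"])
      using zs co[of _ _ 1] co[of _ _ 2] by (auto simp: XP_def)
  qed
qed

end



context PS begin

lemma diag_mem: "x \<in> lp_space p \<Longrightarrow> (\<lambda>r. if r \<in> {1..N} then x else 0) \<in> dsum_carrier N (lp_space p)"
  unfolding dsum_carrier_def by auto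

lemma HC_Q0:
  assumes HC: "sim_hc_criterion (lp_space p) (lp_dist p) N T"
  shows "\<forall>e>0. \<forall>M\<ge>1. \<forall>L. \<exists>n. good e M L n"
proof (intro allI impI)
  fix e :: real and M :: nat and L :: real assume e: "e > 0" and M: "M \<ge> 1"
  obtain nk :: "nat \<Rightarrow> nat" and Y0 W0 and Rk :: "nat \<Rightarrow> (nat \<Rightarrow> nat \<Rightarrow> 'k) \<Rightarrow> (nat \<Rightarrow> 'k)"
    where W0s: "W0 \<subseteq> dsum_carrier N (lp_space p)"
    and diag: "\<forall>y\<in>lp_space p. \<forall>e>0. \<exists>w\<in>W0. dsum_dist N (lp_dist p) w (\<lambda>r. if r \<in> {1..N} then y else 0) < e"
    and Rm: "\<forall>k. \<forall>w\<in>W0. Rk k w \<in> lp_space p"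
    and Rc: "\<forall>w\<in>W0. conv_ms (lp_dist p) (\<lambda>k. Rk k w) 0"
    and Tc: "\<forall>w\<in>W0. \<forall>i\<in>{1..N}. \<exists>y. in_conv_hull N w y \<and> conv_ms (lp_dist p) (\<lambda>k. (T i ^^ nk k) (Rk k w)) y"
    using HC unfolding sim_hc_criterion_def by (elim exE conjE) blast
  show "\<exists>n. good e M L n"
  proof (rule Q0_from_coords[OF e])
    fix \<eta> :: real assume eta: "\<eta> > 0"
    have approx: "\<exists>wv\<in>W0. \<exists>Y. \<forall>i\<in>{1..N}. Y i \<in> lp_space p \<and> (\<forall>m. norm (Y i m - x m) < \<eta>/2) \<and>
        conv_ms (lp_dist p) (\<lambda>k. (T i ^^ nk k) (Rk k wv)) (Y i)" if x: "x \<in> lp_space p" for x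
    proof -
      obtain wv where wv: "wv \<in> W0" "dsum_dist N (lp_dist p) wv (\<lambda>r. if r \<in> {1..N} then x else 0) < \<eta>/2"
        using diag x half_gt_zero[OF eta] by blast
      have wvC: "wv \<in> dsum_carrier N (lp_space p)" using wv W0s by blast
      have wvl: "\<And>j. j \<in> {1..N} \<Longrightarrow> wv j \<in> lp_space p" using wvC unfolding dsum_carrier_def by blast
      have D: "\<And>j m. j \<in> {1..N} \<Longrightarrow> norm (wv j m - x m) \<le> dsum_dist N (lp_dist p) wv (\<lambda>r. if r \<in> {1..N} then x else 0)"
      proof -
        fix j m assume j: "j \<in> {1..N}"
        have "norm (wv j m - (\<lambda>r. if r \<in> {1..N} then x else 0) j m) \<le> dsum_dist N (lp_dist p) wv (\<lambda>r. if r \<in> {1..N} then x else 0)"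
          by (rule dsum_coord[OF wvC diag_mem[OF x] j p0])
        thus "norm (wv j m - x m) \<le> dsum_dist N (lp_dist p) wv (\<lambda>r. if r \<in> {1..N} then x else 0)" using j by simp
      qed
      have "\<forall>i\<in>{1..N}. \<exists>y. y \<in> lp_space p \<and> (\<forall>m. norm (y m - x m) < \<eta>/2) \<and>
        conv_ms (lp_dist p) (\<lambda>k. (T i ^^ nk k) (Rk k wv)) y"
      proof
        fix i assume i: "i \<in> {1..N}"
        obtain y where y: "in_conv_hull N wv y" "conv_ms (lp_dist p) (\<lambda>k. (T i ^^ nk k) (Rk k wv)) y"
          using Tc wv(1) i by blast
        have "y \<in> lp_space p" by (rule conv_hull_coord(1)[OF y(1) wvl p0 D])
        moreover have "\<forall>m. norm (y m - x m) < \<eta>/2"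
          using conv_hull_coord(2)[OF y(1) wvl p0 D] wv(2) by (meson le_less_trans)
        ultimately show "\<exists>y. y \<in> lp_space p \<and> (\<forall>m. norm (y m - x m) < \<eta>/2) \<and>
          conv_ms (lp_dist p) (\<lambda>k. (T i ^^ nk k) (Rk k wv)) y" using y(2) by blast
      qed
      then obtain Y where "\<forall>i\<in>{1..N}. Y i \<in> lp_space p \<and> (\<forall>m. norm (Y i m - x m) < \<eta>/2) \<and>
        conv_ms (lp_dist p) (\<lambda>k. (T i ^^ nk k) (Rk k wv)) (Y i)" by (rule bchoice[elim_format]) blast
      thus ?thesis using wv(1) by blast
    qed
    obtain wv1 Y1 where w1: "wv1 \<in> W0" and Y1: "\<forall>i\<in>{1..N}. Y1 i \<in> lp_space p \<and> (\<forall>m. norm (Y1 i m - x1 M m) < \<eta>/2) \<and>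
        conv_ms (lp_dist p) (\<lambda>k. (T i ^^ nk k) (Rk k wv1)) (Y1 i)" using approx[OF x1_lp] by blast
    obtain wv2 Y2 where w2: "wv2 \<in> W0" and Y2: "\<forall>i\<in>{1..N}. Y2 i \<in> lp_space p \<and> (\<forall>m. norm (Y2 i m - x2 M m) < \<eta>/2) \<and>
        conv_ms (lp_dist p) (\<lambda>k. (T i ^^ nk k) (Rk k wv2)) (Y2 i)" using approx[OF x2_lp] by blast
    have ev: "eventually (\<lambda>k. lp_dist p (s k) y < \<eta>/2) sequentially" if "conv_ms (lp_dist p) s y" for s y
      using order_tendstoD(2)[OF that[unfolded conv_ms_def] half_gt_zero[OF eta]] .
    have E1: "eventually (\<lambda>k. \<forall>i\<in>{1..N}. lp_dist p ((T i ^^ nk k) (Rk k wv1)) (Y1 i) < \<eta>/2) sequentially"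
      by (rule eventually_ball_finite) (use Y1 ev in auto)
    have E2: "eventually (\<lambda>k. \<forall>i\<in>{1..N}. lp_dist p ((T i ^^ nk k) (Rk k wv2)) (Y2 i) < \<eta>/2) sequentially"
      by (rule eventually_ball_finite) (use Y2 ev in auto)
    have E3: "eventually (\<lambda>k. lp_dist p (Rk k wv1) 0 < \<eta>/2) sequentially"
      using ev Rc w1 by blast
    obtain k where k: "\<forall>i\<in>{1..N}. lp_dist p ((T i ^^ nk k) (Rk k wv1)) (Y1 i) < \<eta>/2"
      "\<forall>i\<in>{1..N}. lp_dist p ((T i ^^ nk k) (Rk k wv2)) (Y2 i) < \<eta>/2"
      "lp_dist p (Rk k wv1) 0 < \<eta>/2"
      using eventually_happens'[OF sequentially_bot eventually_conj[OF E1 eventually_conj[OF E2 E3]]] by blast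
    define a where "a = Rk k wv1"
    define b where "b = Rk k wv2"
    have al: "a \<in> lp_space p" and bl: "b \<in> lp_space p" using Rm w1 w2 unfolding a_def b_def by auto
    have small: "\<forall>j. norm (a j) < \<eta>"
    proof
      fix j
      have "norm (a j - 0 j) \<le> lp_dist p a 0" by (rule coord_dist[OF al lp_zero p0])
      thus "norm (a j) < \<eta>" using k(3) eta unfolding a_def by simp
    qed
    have co: "norm (W i m (nk k) * c ((f i ^^ nk k) m) - x m) < \<eta>"
      if i: "i \<in> {1..N}" and m: "m \<ge> 1" and c: "c \<in> lp_space p" and Y: "Y \<in> lp_space p"
        and Yx: "\<forall>m. norm (Y m - x m) < \<eta>/2" and d: "lp_dist p ((T i ^^ nk k) c) Y < \<eta>/2" for i m c Y x
    proof -
      have t1: "norm ((T i ^^ nk k) c m - x m) \<le> norm ((T i ^^ nk k) c m - Y m) + norm (Y m - x m)"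
        by (rule norm_diff_triangle_le[OF order_refl order_refl])
      have t2: "norm ((T i ^^ nk k) c m - Y m) \<le> lp_dist p ((T i ^^ nk k) c) Y"
        by (rule coord_dist[OF Tn_lp[OF i c] Y p0])
      have "norm (Y m - x m) < \<eta>/2" using Yx by blast
      hence "norm ((T i ^^ nk k) c m - x m) < \<eta>" using t1 t2 d by linarith
      thus ?thesis using T_pow[OF i m] by simp
    qed
    show "\<exists>n a b. (\<forall>j. norm (a j) < \<eta>) \<and>
         (\<forall>i\<in>{1..N}. \<forall>m\<ge>1. norm (W i m n * a ((f i ^^ n) m) - x1 M m) < \<eta>) \<and>
         (\<forall>i\<in>{1..N}. \<forall>m\<ge>1. norm (W i m n * b ((f i ^^ n) m) - x2 M m) < \<eta>)"
    proof (rule exI[of _ "nk k"], rule exI[of _ a], rule exI[of _ b], intro conjI ballI allI impI)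
      fix j show "norm (a j) < \<eta>" using small by blast
    next
      fix i m assume i: "i \<in> {1..N}" and m: "(m::nat) \<ge> 1"
      show "norm (W i m (nk k) * a ((f i ^^ nk k) m) - x1 M m) < \<eta>"
        by (rule co[OF i m al]) (use Y1 k(1) i a_def in auto)
    next
      fix i m assume i: "i \<in> {1..N}" and m: "(m::nat) \<ge> 1"
      show "norm (W i m (nk k) * b ((f i ^^ nk k) m) - x2 M m) < \<eta>"
        by (rule co[OF i m bl]) (use Y2 k(2) i b_def in auto)
    qed
  qed
qed

end



lemma inv_near1:
  fixes \<rho> :: "'k::real_normed_field"
  assumes "norm (\<rho> - 1) < \<epsilon>" "\<epsilon> \<le> 1/2"
  shows "norm (1 / \<rho> - 1) \<le> 2 * \<epsilon>"
proof -
  have r: "norm \<rho> > 1 - \<epsilon>" by (rule near1[OF assms(1)])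
  hence nz: "\<rho> \<noteq> 0" using assms by auto
  have "1 / \<rho> - 1 = (1 - \<rho>) / \<rho>" using nz by (simp add: field_simps)
  hence "norm (1 / \<rho> - 1) = norm (\<rho> - 1) / norm \<rho>" by (simp add: norm_divide norm_minus_commute)
  also have "\<dots> \<le> \<epsilon> / (1/2)"
    by (rule frac_le) (use assms r le_less_trans[OF norm_ge_zero assms(1)] in auto)
  finally show ?thesis by simp
qed

context PS begin

lemma goodb_D1: "goodb e M n \<Longrightarrow> i \<in> {1..N} \<Longrightarrow> l \<in> {1..N} \<Longrightarrow> i \<noteq> l \<Longrightarrow> m \<in> {1..M} \<Longrightarrow>
  m' \<ge> 1 \<Longrightarrow> m' \<notin> {1..M} \<Longrightarrow> (f l ^^ n) m = (f i ^^ n) m' \<Longrightarrow> norm (W i m' n / W l m n) < e"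
  unfolding goodb_def by blast

lemma goodb_D2: "goodb e M n \<Longrightarrow> i \<in> {1..N} \<Longrightarrow> l \<in> {1..N} \<Longrightarrow> i \<noteq> l \<Longrightarrow> m \<in> {1..M} \<Longrightarrow>
  m' \<in> {1..M} \<Longrightarrow> (f l ^^ n) m = (f i ^^ n) m' \<Longrightarrow> m = m' \<and> norm (W i m' n / W l m n - 1) < e"
  unfolding goodb_def by blast

definition Rop :: "nat \<Rightarrow> nat \<Rightarrow> (nat \<Rightarrow> 'k) \<Rightarrow> nat \<Rightarrow> 'k" where
  "Rop n S y j = (if \<exists>i\<in>{1..N}. \<exists>m\<in>{1..S}. (f i ^^ n) m = j then
     (let q = SOME q. fst q \<in> {1..N} \<and> snd q \<in> {1..S} \<and> (f (fst q) ^^ n) (snd q) = j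
      in y (snd q) / W (fst q) (snd q) n) else 0)"

lemma Rop_J:
  assumes "\<exists>i\<in>{1..N}. \<exists>m\<in>{1..S}. (f i ^^ n) m = j"
  obtains i0 m0 where "i0 \<in> {1..N}" "m0 \<in> {1..S}" "(f i0 ^^ n) m0 = j" "Rop n S y j = y m0 / W i0 m0 n"
proof -
  define P where "P q = (fst q \<in> {1..N} \<and> snd q \<in> {1..S} \<and> (f (fst q) ^^ n) (snd q) = j)" for q :: "nat \<times> nat"
  obtain i m where im: "i \<in> {1..N}" "m \<in> {1..S}" "(f i ^^ n) m = j" using assms by blast
  have ex: "\<exists>q. P q" unfolding P_def by (rule exI[of _ "(i, m)"]) (use im in simp)
  define q where "q = (SOME q. P q)"
  have Pq: "P q" unfolding q_def by (rule someI_ex[OF ex])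
  have "Rop n S y j = y (snd q) / W (fst q) (snd q) n"
    unfolding Rop_def using assms by (simp add: q_def P_def Let_def)
  thus ?thesis using that[of "fst q" "snd q"] Pq unfolding P_def by blast
qed

lemma Rop_notJ:
  "\<not> (\<exists>i\<in>{1..N}. \<exists>m\<in>{1..S}. (f i ^^ n) m = j) \<Longrightarrow> Rop n S y j = 0"
  unfolding Rop_def by simp

definition JJ :: "nat \<Rightarrow> nat \<Rightarrow> nat set" where
  "JJ n S = (\<lambda>(i, m). (f i ^^ n) m) ` ({1..N} \<times> {1..S})"

lemma JJ_iff: "j \<in> JJ n S \<longleftrightarrow> (\<exists>i\<in>{1..N}. \<exists>m\<in>{1..S}. (f i ^^ n) m = j)"
proof
  assume "j \<in> JJ n S"
  then obtain q where "q \<in> {1..N} \<times> {1..S}" "j = (\<lambda>(i, m). (f i ^^ n) m) q" unfolding JJ_def by blast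
  moreover obtain a b where ab: "q = (a, b)" by (cases q)
  ultimately have "a \<in> {1..N}" "b \<in> {1..S}" "(f a ^^ n) b = j" by auto
  thus "\<exists>i\<in>{1..N}. \<exists>m\<in>{1..S}. (f i ^^ n) m = j" by blast
next
  assume "\<exists>i\<in>{1..N}. \<exists>m\<in>{1..S}. (f i ^^ n) m = j"
  then obtain i m where im: "i \<in> {1..N}" "m \<in> {1..S}" "(f i ^^ n) m = j" by blast
  have "(\<lambda>(i, m). (f i ^^ n) m) (i, m) \<in> JJ n S" unfolding JJ_def by (rule imageI) (use im in auto)
  thus "j \<in> JJ n S" using im by simp
qed

lemma JJ_fin: "finite (JJ n S)" unfolding JJ_def by simp

lemma JJ_card: "card (JJ n S) \<le> N * S"
proof -
  have "card (JJ n S) \<le> card ({1..N} \<times> {1..S})" unfolding JJ_def by (rule card_image_le) simp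
  thus ?thesis by (simp add: card_cartesian_product)
qed

lemma JJ_pos: assumes "j \<in> JJ n S" shows "j \<ge> 1"
proof -
  obtain i m where im: "i \<in> {1..N}" "m \<in> {1..S}" "(f i ^^ n) m = j" using assms unfolding JJ_iff by blast
  have "(f i ^^ n) m \<ge> m + n" by (rule fn_ge) (use im in auto)
  thus ?thesis using im by simp
qed

lemma Rop_zero_out: "j \<notin> JJ n S \<Longrightarrow> Rop n S y j = 0"
  using Rop_notJ JJ_iff by blast

lemma Rop_est1:
  assumes g: "good \<epsilon> S L n" and L: "L > 0" and B: "\<And>m. norm (y m) \<le> B"
  shows "Rop n S y \<in> lp_space p" "psum p (Rop n S y) \<le> real (N * S) * (B / L) powr p"
proof -
  have z: "\<And>j. j \<notin> JJ n S \<Longrightarrow> Rop n S y j = 0" by (rule Rop_zero_out)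
  have "0 \<notin> JJ n S" using JJ_pos[of 0 n S] by auto
  hence z0: "Rop n S y 0 = 0" by (rule z)
  show "Rop n S y \<in> lp_space p" by (rule lp_finite[of "JJ n S" "Rop n S y", OF JJ_fin z z0 p0])
  have bnd: "norm (Rop n S y j) \<le> B / L" if j: "j \<in> JJ n S" for j
  proof -
    have ex: "\<exists>i\<in>{1..N}. \<exists>m\<in>{1..S}. (f i ^^ n) m = j" using j by (simp only: JJ_iff)
    obtain i0 m0 where q: "i0 \<in> {1..N}" "m0 \<in> {1..S}" "(f i0 ^^ n) m0 = j" "Rop n S y j = y m0 / W i0 m0 n"
      by (rule Rop_J[where y=y, OF ex])
    have WL: "norm (W i0 m0 n) > L" using g q unfolding good_def by blast
    have e1: "norm (Rop n S y j) = norm (y m0) / norm (W i0 m0 n)" using q(4) by (simp add: norm_divide)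
    have B0: "0 \<le> B" using order.trans[OF norm_ge_zero B] .
    have "norm (y m0) / norm (W i0 m0 n) \<le> B / L" by (rule frac_le[OF B0 B L]) (use WL in linarith)
    thus ?thesis using e1 by simp
  qed
  have "psum p (Rop n S y) \<le> real (card (JJ n S)) * (B / L) powr p"
    by (rule psum_finite_le[of "JJ n S" "Rop n S y", OF JJ_fin z p0 bnd])
  also have "\<dots> \<le> real (N * S) * (B / L) powr p"
    by (rule mult_right_mono) (metis JJ_card of_nat_le_iff, simp)
  finally show "psum p (Rop n S y) \<le> real (N * S) * (B / L) powr p" .
qed

lemma Rop_err:
  assumes g: "good \<epsilon> S L n" and eps: "\<epsilon> \<le> 1/2" and eps0: "\<epsilon> > 0" and L: "L > 0" and B: "\<And>m. norm (y m) \<le> B"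
    and y0: "y 0 = 0" and ys: "\<And>m. m > S \<Longrightarrow> y m = 0" and l: "l \<in> {1..N}"
  shows "summable (\<lambda>m. norm ((T l ^^ n) (Rop n S y) m - y m) powr p)"
    "psum p (\<lambda>m. (T l ^^ n) (Rop n S y) m - y m) \<le> real ((N + 1) * S) * (2 * \<epsilon> * B) powr p"
proof -
  define z where "z = Rop n S y"
  have gb: "goodb \<epsilon> S n" using g unfolding good_def by blast
  define err where "err m = (T l ^^ n) z m - y m" for m
  define E where "E = {1..S} \<union> ((f l ^^ n) -` JJ n S \<inter> {1..})"
  have finE: "finite E" unfolding E_def by (intro finite_UnI finite_vimage_IntI JJ_fin fn_inj[OF l]) simp
  have cardE: "card E \<le> (N + 1) * S"
  proof -
    have "card E \<le> card {1..S} + card ((f l ^^ n) -` JJ n S \<inter> {1..})" unfolding E_def by (rule card_Un_le)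
    also have "card ((f l ^^ n) -` JJ n S \<inter> {1..}) \<le> card (JJ n S)"
      by (rule card_vimage_inj_on_le[OF fn_inj[OF l] JJ_fin])
    finally have "card E \<le> S + card (JJ n S)" by simp
    thus ?thesis using JJ_card[of n S] by simp
  qed
  have err0: "err 0 = 0"
  proof (cases n)
    case 0
    have "0 \<notin> JJ n S" using JJ_pos[of 0 n S] by auto
    hence "Rop n S y 0 = 0" by (rule Rop_zero_out)
    thus ?thesis using 0 y0 unfolding err_def z_def by simp
  next
    case (Suc k) thus ?thesis using shift_pow0[of n] y0 unfolding err_def by simp
  qed
  have errm: "err m = W l m n * z ((f l ^^ n) m) - y m" if "m \<ge> 1" for m
    unfolding err_def using T_pow[OF l that] by simp
  have out: "err m = 0" if "m \<notin> E" for m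
  proof (cases "m = 0")
    case True thus ?thesis using err0 by simp
  next
    case False
    hence m1: "m \<ge> 1" by simp
    have "(f l ^^ n) m \<notin> JJ n S" using that m1 unfolding E_def by simp
    moreover have "m \<notin> {1..S}" using that unfolding E_def by blast
    ultimately have "z ((f l ^^ n) m) = 0" "y m = 0" using Rop_zero_out ys m1 unfolding z_def by auto
    thus ?thesis using errm[OF m1] by simp
  qed
  have bnd: "norm (err m) \<le> 2 * \<epsilon> * B" if mE: "m \<in> E" for m
  proof (cases "m = 0")
    case True thus ?thesis using err0 order.trans[OF norm_ge_zero B] eps0 by simp
  next
    case False
    hence m1: "m \<ge> 1" by simp
    have B0: "B \<ge> 0" using order.trans[OF norm_ge_zero B] .
    show ?thesis
    proof (cases "(f l ^^ n) m \<in> JJ n S")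
      case False
      have "m \<notin> {1..S}"
      proof
        assume "m \<in> {1..S}"
        hence "\<exists>i\<in>{1..N}. \<exists>m'\<in>{1..S}. (f i ^^ n) m' = (f l ^^ n) m" using l by blast
        hence "(f l ^^ n) m \<in> JJ n S" by (simp only: JJ_iff)
        thus False using False by contradiction
      qed
      hence "y m = 0" using ys m1 by auto
      hence "err m = 0" using errm[OF m1] Rop_zero_out[OF False] unfolding z_def by simp
      moreover have "0 \<le> \<epsilon>" using eps0 by simp
      ultimately show ?thesis using B0 by simp
    next
      case True
      have ex: "\<exists>i\<in>{1..N}. \<exists>m'\<in>{1..S}. (f i ^^ n) m' = (f l ^^ n) m" using True by (simp only: JJ_iff)
      obtain i0 m0 where q: "i0 \<in> {1..N}" "m0 \<in> {1..S}" "(f i0 ^^ n) m0 = (f l ^^ n) m"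
        "z ((f l ^^ n) m) = y m0 / W i0 m0 n"
        unfolding z_def by (rule Rop_J[where y=y, OF ex])
      have Wnz: "W i0 m0 n \<noteq> 0" "W l m n \<noteq> 0" using W_nz q(1,2) l m1 by auto
      show ?thesis
      proof (cases "m \<in> {1..S}")
        case mS: True
        show ?thesis
        proof (cases "i0 = l")
          case True
          hence "m0 = m" using fn_inj'[OF l _ m1 q(3)[unfolded True]] q(2) by auto
          hence "err m = 0" using errm[OF m1] q(4) Wnz True by simp
          moreover have "0 \<le> \<epsilon>" using eps0 by simp
          ultimately show ?thesis using B0 by simp
        next
          case False
          have G: "m = m0 \<and> norm (W i0 m0 n / W l m n - 1) < \<epsilon>"
            by (rule goodb_D2[OF gb q(1) l False mS q(2) q(3)[symmetric]])
          hence mm: "m0 = m" by simp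
          have Wnz': "W i0 m n \<noteq> 0" using Wnz mm by simp
          have "err m = W l m n * (y m / W i0 m n) - y m" using errm[OF m1] q(4) mm by simp
          also have "\<dots> = y m * (1 / (W i0 m n / W l m n) - 1)" using Wnz' Wnz(2) by (simp add: field_simps)
          finally have "err m = y m * (1 / (W i0 m n / W l m n) - 1)" .
          hence "norm (err m) = norm (y m) * norm (1 / (W i0 m n / W l m n) - 1)" by (simp add: norm_mult)
          also have "\<dots> \<le> B * (2 * \<epsilon>)"
          proof (rule mult_mono[OF B])
            show "norm (1 / (W i0 m n / W l m n) - 1) \<le> 2 * \<epsilon>"
              by (rule inv_near1) (use G mm eps in simp_all)
          qed (use B0 in simp_all)
          finally show ?thesis by (simp add: mult.commute mult.left_commute)
        qed
      next
        case mS: False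
        have ym: "y m = 0" using ys mS m1 by auto
        have il: "i0 \<noteq> l"
        proof
          assume "i0 = l"
          hence "m0 = m" using fn_inj'[OF l _ m1 q(3)[unfolded \<open>i0 = l\<close>]] q(2) by auto
          thus False using mS q(2) by simp
        qed
        have G: "norm (W l m n / W i0 m0 n) < \<epsilon>"
          by (rule goodb_D1[OF gb l q(1) il[symmetric] q(2) m1 mS q(3)])
        have "err m = y m0 * (W l m n / W i0 m0 n)"
          using errm[OF m1] q(4) ym by (simp add: field_simps)
        hence "norm (err m) = norm (y m0) * norm (W l m n / W i0 m0 n)" by (simp add: norm_mult norm_divide)
        also have "\<dots> \<le> B * \<epsilon>"
          by (rule mult_mono[OF B]) (use G B0 in simp_all)
        also have "\<dots> \<le> 2 * \<epsilon> * B" using B0 eps0 by (simp add: mult_right_mono)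
        finally show ?thesis .
      qed
    qed
  qed
  show "summable (\<lambda>m. norm ((T l ^^ n) (Rop n S y) m - y m) powr p)"
    using psum_finite(1)[OF finE out p0] unfolding err_def z_def .
  have "psum p err \<le> real (card E) * (2 * \<epsilon> * B) powr p"
    by (rule psum_finite_le[OF finE out p0 bnd])
  also have "\<dots> \<le> real ((N + 1) * S) * (2 * \<epsilon> * B) powr p"
    by (rule mult_right_mono) (metis cardE of_nat_le_iff, simp)
  finally show "psum p (\<lambda>m. (T l ^^ n) (Rop n S y) m - y m) \<le> real ((N + 1) * S) * (2 * \<epsilon> * B) powr p"
    unfolding err_def z_def .
qed

end



lemma lp_dist_sym: "lp_dist p a b = lp_dist p b a"
  unfolding lp_dist_def by (simp add: norm_minus_commute)

lemma psum_lt_of_dist: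
  assumes p: "p > 0" and s: "summable (\<lambda>m. norm (a m - b m) powr p)" and d: "lp_dist p a b < e"
  shows "psum p (\<lambda>m. a m - b m) < e powr p"
proof -
  have nn: "psum p (\<lambda>m. a m - b m) \<ge> 0" by (rule psum_nonneg[OF s])
  have "psum p (\<lambda>m. a m - b m) = (psum p (\<lambda>m. a m - b m) powr (1/p)) powr p"
    using p nn by (simp add: powr_powr)
  also have "\<dots> < e powr p"
    by (rule powr_less_mono2) (use p d in \<open>auto simp: lp_dist_psum\<close>)
  finally show ?thesis .
qed

lemma quasi_tri:
  assumes p: "p \<ge> 1" and e: "e > 0"
    and sab: "summable (\<lambda>m. norm (a m - b m) powr p)" and sbc: "summable (\<lambda>m. norm (b m - c m) powr p)"
    and d1: "lp_dist p a b < e / 4" and d2: "lp_dist p b c < e / 4"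
  shows "lp_dist p a c < e"
proof -
  have p0: "p > 0" using p by simp
  have h1: "psum p (\<lambda>m. a m - b m) < (e/4) powr p" by (rule psum_lt_of_dist[OF p0 sab d1])
  have h2: "psum p (\<lambda>m. b m - c m) < (e/4) powr p" by (rule psum_lt_of_dist[OF p0 sbc d2])
  have eq: "(\<lambda>m. a m - c m) = (\<lambda>m. (a m - b m) + (b m - c m))" by auto
  have "summable (\<lambda>m. norm ((a m - b m) + (b m - c m)) powr p)" by (rule lp_add(1)[OF p0 sab sbc])
  hence sac: "summable (\<lambda>m. norm (a m - c m) powr p)" by simp
  have "psum p (\<lambda>m. a m - c m) \<le> 2 powr p * (psum p (\<lambda>m. a m - b m) + psum p (\<lambda>m. b m - c m))"
    unfolding eq by (rule lp_add(2)[OF p0 sab sbc])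
  also have "\<dots> < 2 powr p * ((e/4) powr p + (e/4) powr p)"
    using h1 h2 by (intro mult_strict_left_mono) auto
  also have "\<dots> = 2 * (e/2) powr p"
  proof -
    have "2 powr p * (e/4) powr p = (2 * (e/4)) powr p" using powr_mult[of 2 "e/4" p] e by simp
    thus ?thesis by simp
  qed
  also have "\<dots> \<le> 2 powr p * (e/2) powr p"
  proof -
    have "(2::real) powr 1 \<le> 2 powr p" by (rule powr_mono) (use p in auto)
    thus ?thesis using e by (intro mult_right_mono) auto
  qed
  also have "\<dots> = e powr p" using e by (simp add: powr_mult[symmetric])
  finally show ?thesis by (rule dist_lt[OF p0 e _ sac])
qed

definition trunc :: "nat \<Rightarrow> (nat \<Rightarrow> 'k::real_normed_vector) \<Rightarrow> nat \<Rightarrow> 'k" where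
  "trunc S x = (\<lambda>m. if m \<le> S then x m else 0)"

lemma trunc_lp: "x \<in> lp_space p \<Longrightarrow> p > 0 \<Longrightarrow> trunc S x \<in> lp_space p"
  by (rule lp_finite[of "{..S}"]) (auto simp: trunc_def lp_space_def)

lemma trunc_small:
  assumes x: "x \<in> lp_space p" and p: "p > 0" and e: "e > 0"
  shows "\<exists>S0. \<forall>S\<ge>S0. lp_dist p x (trunc S x) < e"
proof -
  define g where "g m = norm (x m) powr p" for m
  have sg: "summable g" using x unfolding g_def lp_space_def by simp
  have "(\<lambda>n. \<Sum>i<n. g i) \<longlonglongrightarrow> suminf g" by (rule summable_LIMSEQ[OF sg])
  hence ev: "eventually (\<lambda>n. dist (\<Sum>i<n. g i) (suminf g) < e powr p) sequentially"
    using e by (intro tendstoD) auto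
  then obtain S0 where S0: "\<And>n. n \<ge> S0 \<Longrightarrow> dist (\<Sum>i<n. g i) (suminf g) < e powr p"
    unfolding eventually_sequentially by blast
  have "lp_dist p x (trunc S x) < e" if S: "S \<ge> S0" for S
  proof -
    define h where "h m = (if m \<le> S then 0 else g m)" for m
    have hs: "(\<lambda>m. norm (x m - trunc S x m) powr p) = h" unfolding h_def g_def trunc_def by auto
    have fin: "summable (\<lambda>m. if m < Suc S then g m else 0)"
      by (rule summable_finite[of "{..<Suc S}"]) auto
    have "h = (\<lambda>m. g m - (if m < Suc S then g m else 0))" unfolding h_def by auto
    hence "suminf h = suminf g - (\<Sum>m. if m < Suc S then g m else 0)"
      using suminf_diff[OF sg fin] by simp
    also have "(\<Sum>m. if m < Suc S then g m else 0) = (\<Sum>i<Suc S. g i)"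
      using suminf_finite[of "{..<Suc S}" "\<lambda>m. if m < Suc S then g m else 0"] by simp
    finally have "suminf h = suminf g - (\<Sum>i<Suc S. g i)" .
    moreover have "dist (\<Sum>i<Suc S. g i) (suminf g) < e powr p" using S0[of "Suc S"] S by simp
    ultimately have "suminf h < e powr p" by (simp add: dist_real_def)
    moreover have "summable h" using summable_diff[OF sg fin] \<open>h = _\<close> by simp
    ultimately show ?thesis
      by (intro dist_lt[OF p e]) (simp_all add: hs psum_def)
  qed
  thus ?thesis by blast
qed

context PS begin

lemma Rop_lp: "Rop n S y \<in> lp_space p"
proof -
  have "0 \<notin> JJ n S" using JJ_pos[of 0 n S] by auto
  hence z0: "Rop n S y 0 = 0" by (rule Rop_zero_out)
  show ?thesis by (rule lp_finite[of "JJ n S" "Rop n S y", OF JJ_fin Rop_zero_out z0 p0])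
qed

lemma T_kill:
  assumes i: "i \<in> {1..N}" and ys: "\<And>m. m > S \<Longrightarrow> y m = 0" and n: "n > S"
  shows "(T i ^^ n) y = 0"
proof
  fix m
  show "(T i ^^ n) y m = 0 m"
  proof (cases "m = 0")
    case True thus ?thesis using shift_pow0[of n] n by simp
  next
    case False
    hence m1: "m \<ge> 1" by simp
    have "(f i ^^ n) m \<ge> m + n" by (rule fn_ge[OF i m1])
    hence "y ((f i ^^ n) m) = 0" using ys n m1 by simp
    thus ?thesis using T_pow[OF i m1] by simp
  qed
qed

lemma seq_est:
  assumes sq: "SEQ nk" and y0: "y 0 = 0" and ys: "\<And>m. m > S \<Longrightarrow> y m = 0" and e: "e > 0"
  shows "eventually (\<lambda>k. S < nk k \<and> lp_dist p (Rop (nk k) S y) 0 < e \<and>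
     (\<forall>l\<in>{1..N}. lp_dist p ((T l ^^ nk k) (Rop (nk k) S y)) y < e)) sequentially"
proof -
  obtain B where B: "\<And>m. norm (y m) \<le> B" "B \<ge> 0"
  proof -
    have "\<forall>m. norm (y m) \<le> (\<Sum>i\<le>S. norm (y i))"
    proof
      fix m show "norm (y m) \<le> (\<Sum>i\<le>S. norm (y i))"
      proof (cases "m \<le> S")
        case True thus ?thesis by (intro member_le_sum) auto
      next
        case False thus ?thesis using ys[of m] by (simp add: sum_nonneg)
      qed
    qed
    thus ?thesis using that[of "\<Sum>i\<le>S. norm (y i)"] by (simp add: sum_nonneg)
  qed
  define c where "c = real ((N + 1) * S)"
  have c0: "c \<ge> 0" unfolding c_def by simp
  define \<theta> where "\<theta> = (e powr p / (c + 1)) powr (1/p)"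
  have th0: "\<theta> > 0" unfolding \<theta>_def using e c0 by simp
  have thp: "\<theta> powr p = e powr p / (c + 1)" unfolding \<theta>_def using e c0 p0 by (simp add: powr_powr)
  obtain K0 :: nat where K0: "2 * B / \<theta> < real K0" using reals_Archimedean2 by blast
  define K where "K = max K0 (S + 1)"
  have main: "S < nk k \<and> lp_dist p (Rop (nk k) S y) 0 < e \<and>
     (\<forall>l\<in>{1..N}. lp_dist p ((T l ^^ nk k) (Rop (nk k) S y)) y < e)" if k: "k \<ge> K" for k
  proof -
    have sm: "strict_mono nk" and gk: "good (1 / (real k + 1)) (k + 1) (real k + 1) (nk k)"
      using sq unfolding SEQ_def by auto
    have k1: "k \<ge> 1" "k + 1 \<ge> S" using k unfolding K_def by auto
    define \<epsilon> where "\<epsilon> = 1 / (real k + 1)"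
    have eps: "\<epsilon> \<le> 1/2" "\<epsilon> > 0" unfolding \<epsilon>_def using k1 by (auto simp: field_simps)
    have g: "good \<epsilon> S (real k + 1) (nk k)" using good_mono[OF gk] k1 unfolding \<epsilon>_def by auto
    have Lp: "real k + 1 > 0" by simp
    have "2 * B * \<epsilon> < \<theta>"
    proof -
      have "2 * B < \<theta> * real K0" using K0 th0 by (simp add: field_simps)
      also have "\<dots> \<le> \<theta> * (real k + 1)" using k th0 unfolding K_def by (intro mult_left_mono) auto
      finally show ?thesis unfolding \<epsilon>_def by (simp add: field_simps)
    qed
    hence small: "c * (2 * \<epsilon> * B) powr p < e powr p"
    proof -
      have "(2 * \<epsilon> * B) powr p \<le> \<theta> powr p"
        using \<open>2 * B * \<epsilon> < \<theta>\<close> B(2) eps p0 by (intro powr_mono2) (auto simp: algebra_simps)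
      hence "c * (2 * \<epsilon> * B) powr p \<le> c * (e powr p / (c + 1))" using c0 thp by (intro mult_left_mono) auto
      also have "\<dots> < e powr p" using c0 e by (simp add: field_simps)
      finally show ?thesis .
    qed
    have "S < nk k" using seq_suble[OF sm, of k] k unfolding K_def by simp
    moreover have "lp_dist p (Rop (nk k) S y) 0 < e"
    proof (rule dist_lt[OF p0 e])
      show "summable (\<lambda>m. norm (Rop (nk k) S y m - 0 m) powr p)"
        using Rop_lp unfolding lp_space_def by simp
      have "psum p (Rop (nk k) S y) \<le> real (N * S) * (B / (real k + 1)) powr p"
        by (rule Rop_est1(2)[OF g Lp B(1)])
      also have "\<dots> \<le> c * (2 * \<epsilon> * B) powr p"
      proof (rule mult_mono)
        show "real (N * S) \<le> c" unfolding c_def by simp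
        show "(B / (real k + 1)) powr p \<le> (2 * \<epsilon> * B) powr p"
          using B(2) p0 by (intro powr_mono2) (auto simp: \<epsilon>_def field_simps)
      qed (use c0 in auto)
      finally show "psum p (\<lambda>m. Rop (nk k) S y m - 0 m) < e powr p" using small by simp
    qed
    moreover have "\<forall>l\<in>{1..N}. lp_dist p ((T l ^^ nk k) (Rop (nk k) S y)) y < e"
    proof
      fix l assume l: "l \<in> {1..N}"
      note RE = Rop_err[where y=y and B=B, OF g eps(1) eps(2) Lp B(1) y0 ys l]
      show "lp_dist p ((T l ^^ nk k) (Rop (nk k) S y)) y < e"
      proof (rule dist_lt[OF p0 e _ RE(1)])
        show "psum p (\<lambda>m. (T l ^^ nk k) (Rop (nk k) S y) m - y m) < e powr p"
          using RE(2) small unfolding c_def by linarith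
      qed
    qed
    ultimately show ?thesis by blast
  qed
  show ?thesis unfolding eventually_sequentially using main by blast
qed

end



lemma sum_lt:
  fixes g :: "nat \<Rightarrow> real"
  assumes R: "R \<ge> 1" and e: "\<And>r. r \<in> {1..R} \<Longrightarrow> g r < e / real R"
  shows "(\<Sum>r\<in>{1..R}. g r) < e"
proof -
  have "(\<Sum>r\<in>{1..R}. g r) < (\<Sum>r\<in>{1..R}. e / real R)"
    by (rule sum_strict_mono) (use R e in auto)
  also have "\<dots> = e" using R by simp
  finally show ?thesis .
qed

lemma conv_of_ev:
  assumes "\<And>e. e > 0 \<Longrightarrow> eventually (\<lambda>k. g k < e) sequentially" "\<And>k. g k \<ge> (0::real)"
  shows "g \<longlonglongrightarrow> 0"
proof (rule order_tendstoI)
  fix a :: real assume "a < 0" thus "eventually (\<lambda>k. a < g k) sequentially"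
    using assms(2) by (intro always_eventually) (auto intro: less_le_trans)
next
  fix a :: real assume "0 < a" thus "eventually (\<lambda>k. g k < a) sequentially" by (rule assms(1))
qed

lemma lp_dist_self: "lp_dist p (x::nat \<Rightarrow> 'k::real_normed_vector) x = 0"
  unfolding lp_dist_def by simp

context PS begin

lemma seq_ge: "SEQ nk \<Longrightarrow> nk k \<ge> k"
  unfolding SEQ_def using seq_suble by blast

lemma ev_kill:
  assumes sq: "SEQ nk"
  shows "eventually (\<lambda>k. S < nk k) sequentially"
  unfolding eventually_sequentially using seq_ge[OF sq] by (intro exI[of _ "Suc S"]) (auto intro: less_le_trans)

lemma SEQ_BC:
  assumes sq: "SEQ nk" and R: "R \<ge> 1"
  shows "sim_bc_criterion (dsum_carrier R (lp_space p)) (dsum_dist R (lp_dist p)) N (\<lambda>i. dsum_op R (T i))"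
proof -
  define CR where "CR = dsum_carrier R (lp_space p :: (nat \<Rightarrow> 'k) set)"
  define d where "d = dsum_dist R (lp_dist p :: (nat \<Rightarrow> 'k) \<Rightarrow> _)"
  define Y0 where "Y0 = {y \<in> CR. \<exists>S. \<forall>r m. S < m \<longrightarrow> y r m = (0::'k)}"
  define sb where "sb y = (SOME S. \<forall>r m. S < m \<longrightarrow> y r m = (0::'k))" for y :: "nat \<Rightarrow> nat \<Rightarrow> 'k"
  define Sk where "Sk k y = (\<lambda>r. if r \<in> {1..R} then Rop (nk k) (sb y) (y r) else 0)" for k y
  have sbp: "\<And>r m. sb y < m \<Longrightarrow> y r m = 0" if "y \<in> Y0" for y
  proof -
    have "\<exists>S. \<forall>r m. S < m \<longrightarrow> y r m = (0::'k)" using that unfolding Y0_def by blast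
    from someI_ex[OF this] show "\<And>r m. sb y < m \<Longrightarrow> y r m = 0" unfolding sb_def by blast
  qed
  have mono: "mono nk" using sq unfolding SEQ_def by (blast intro: strict_mono_mono)
  have dense: "dense_in_ms CR d Y0"
    unfolding dense_in_ms_def
  proof (intro conjI ballI allI impI)
    show "Y0 \<subseteq> CR" unfolding Y0_def by blast
    fix x e assume x: "x \<in> CR" and e: "(e::real) > 0"
    have xr: "x r \<in> lp_space p" if "r \<in> {1..R}" for r using x that unfolding CR_def dsum_carrier_def by blast
    have "\<forall>r\<in>{1..R}. \<exists>S0. \<forall>S\<ge>S0. lp_dist p (x r) (trunc S (x r)) < e / real R"
      using trunc_small[OF xr p0] e R by simp
    then obtain S0 where S0: "\<forall>r\<in>{1..R}. \<forall>S\<ge>S0 r. lp_dist p (x r) (trunc S (x r)) < e / real R"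
      by (rule bchoice[elim_format]) blast
    define S where "S = (\<Sum>r\<in>{1..R}. S0 r)"
    have SS: "S \<ge> S0 r" if "r \<in> {1..R}" for r unfolding S_def by (rule member_le_sum) (use that in auto)
    define a where "a = (\<lambda>r. if r \<in> {1..R} then trunc S (x r) else 0)"
    have aC: "a \<in> CR" unfolding a_def CR_def dsum_carrier_def using trunc_lp[OF xr p0] by auto
    have "a \<in> Y0" unfolding Y0_def using aC by (auto simp: a_def trunc_def intro!: exI[of _ S])
    moreover have "d x a < e"
      unfolding d_def dsum_dist_def
      by (rule sum_lt[OF R]) (use S0 SS in \<open>auto simp: a_def\<close>)
    ultimately show "\<exists>a\<in>Y0. d x a < e" by blast
  qed
  have Skm: "\<forall>k. \<forall>y\<in>Y0. Sk k y \<in> CR"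
    unfolding Sk_def CR_def dsum_carrier_def using Rop_lp by auto
  have conv0: "\<forall>i\<in>{1..N}. \<forall>y\<in>Y0. conv_ms d (\<lambda>k. (dsum_op R (T i) ^^ nk k) y) 0"
  proof (intro ballI)
    fix i y assume i: "i \<in> {1..N}" and y: "y \<in> Y0"
    have yC: "y \<in> CR" using y unfolding Y0_def by blast
    have "eventually (\<lambda>k. d ((dsum_op R (T i) ^^ nk k) y) 0 = 0) sequentially"
      using ev_kill[OF sq, of "sb y"]
    proof (rule eventually_mono)
      fix k assume k: "sb y < nk k"
      have "(dsum_op R (T i) ^^ nk k) y = 0"
      proof
        fix r
        show "(dsum_op R (T i) ^^ nk k) y r = 0 r"
          using dsum_pow[where x=y and R=R and X="lp_space p" and S="T i" and n="nk k"] yC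
            T_kill[OF i sbp[OF y] k] unfolding CR_def by simp
      qed
      thus "d ((dsum_op R (T i) ^^ nk k) y) 0 = 0" unfolding d_def dsum_dist_def by (simp add: lp_dist_self)
    qed
    thus "conv_ms d (\<lambda>k. (dsum_op R (T i) ^^ nk k) y) 0"
      unfolding conv_ms_def by (rule tendsto_eventually)
  qed
  have bc: "\<forall>e>0. \<forall>K. \<forall>y0\<in>Y0. \<exists>k\<ge>K. d (Sk k y0) 0 < e \<and>
            (\<forall>i\<in>{1..N}. d ((dsum_op R (T i) ^^ nk k) (Sk k y0)) y0 < e)"
  proof (intro allI impI ballI)
    fix e :: real and K :: nat and y0 assume e: "e > 0" and y0: "y0 \<in> Y0"
    have y0C: "y0 \<in> CR" using y0 unfolding Y0_def by blast
    have yr0: "y0 r 0 = 0" if "r \<in> {1..R}" for r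
      using y0C that unfolding CR_def dsum_carrier_def lp_space_def by blast
    have eR: "e / real R > 0" using e R by simp
    have "\<forall>r\<in>{1..R}. eventually (\<lambda>k. sb y0 < nk k \<and> lp_dist p (Rop (nk k) (sb y0) (y0 r)) 0 < e / real R \<and>
       (\<forall>l\<in>{1..N}. lp_dist p ((T l ^^ nk k) (Rop (nk k) (sb y0) (y0 r))) (y0 r) < e / real R)) sequentially"
    proof
      fix r assume r: "r \<in> {1..R}"
      show "eventually (\<lambda>k. sb y0 < nk k \<and> lp_dist p (Rop (nk k) (sb y0) (y0 r)) 0 < e / real R \<and>
       (\<forall>l\<in>{1..N}. lp_dist p ((T l ^^ nk k) (Rop (nk k) (sb y0) (y0 r))) (y0 r) < e / real R)) sequentially"
        by (rule seq_est[where y="y0 r", OF sq yr0[OF r] sbp[OF y0] eR])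
    qed
    hence "eventually (\<lambda>k. \<forall>r\<in>{1..R}. sb y0 < nk k \<and> lp_dist p (Rop (nk k) (sb y0) (y0 r)) 0 < e / real R \<and>
       (\<forall>l\<in>{1..N}. lp_dist p ((T l ^^ nk k) (Rop (nk k) (sb y0) (y0 r))) (y0 r) < e / real R)) sequentially"
      by (rule eventually_ball_finite[rotated]) simp
    moreover have "eventually (\<lambda>k. K \<le> k) sequentially" by (rule eventually_ge_at_top)
    ultimately obtain k where k: "K \<le> k" "\<forall>r\<in>{1..R}. lp_dist p (Rop (nk k) (sb y0) (y0 r)) 0 < e / real R \<and>
       (\<forall>l\<in>{1..N}. lp_dist p ((T l ^^ nk k) (Rop (nk k) (sb y0) (y0 r))) (y0 r) < e / real R)"
      using eventually_happens'[OF sequentially_bot eventually_conj] by (metis (no_types, lifting))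
    have "d (Sk k y0) 0 < e"
      unfolding d_def dsum_dist_def by (rule sum_lt[OF R]) (use k(2) in \<open>auto simp: Sk_def\<close>)
    moreover have "\<forall>i\<in>{1..N}. d ((dsum_op R (T i) ^^ nk k) (Sk k y0)) y0 < e"
    proof
      fix i assume i: "i \<in> {1..N}"
      have SkC: "Sk k y0 \<in> CR" using Skm y0 by blast
      have eq: "(dsum_op R (T i) ^^ nk k) (Sk k y0) r = (T i ^^ nk k) (Rop (nk k) (sb y0) (y0 r))"
        if r: "r \<in> {1..R}" for r
        using dsum_pow[where x="Sk k y0" and R=R and X="lp_space p" and S="T i" and n="nk k"] SkC r
        unfolding CR_def Sk_def by simp
      show "d ((dsum_op R (T i) ^^ nk k) (Sk k y0)) y0 < e"
        unfolding d_def dsum_dist_def by (rule sum_lt[OF R]) (use k(2) i eq in auto)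
    qed
    ultimately show "\<exists>k\<ge>K. d (Sk k y0) 0 < e \<and>
            (\<forall>i\<in>{1..N}. d ((dsum_op R (T i) ^^ nk k) (Sk k y0)) y0 < e)" using k(1) by blast
  qed
  show ?thesis
    unfolding sim_bc_criterion_def CR_def[symmetric] d_def[symmetric]
    using mono dense Skm conv0 bc by blast
qed

end



context PS begin

lemma SEQ_HC:
  assumes sq: "SEQ nk"
  shows "sim_hc_criterion (lp_space p) (lp_dist p) N T"
proof -
  define FS where "FS = {x \<in> lp_space p. \<exists>S. \<forall>m. S < m \<longrightarrow> x m = (0::'k)}"
  define sb where "sb x = (SOME S. \<forall>m. S < m \<longrightarrow> x m = (0::'k))" for x :: "nat \<Rightarrow> 'k"
  define dg where "dg x = (\<lambda>r::nat. if r \<in> {1..N} then x else (0 :: nat \<Rightarrow> 'k))" for x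
  define W0 where "W0 = dg ` FS"
  define Rk where "Rk k wv = Rop (nk k) (sb (wv 1)) (wv 1)" for k and wv :: "nat \<Rightarrow> nat \<Rightarrow> 'k"
  have sbp: "\<And>m. sb x < m \<Longrightarrow> x m = 0" if "x \<in> FS" for x
  proof -
    have "\<exists>S. \<forall>m. S < m \<longrightarrow> x m = (0::'k)" using that unfolding FS_def by blast
    from someI_ex[OF this] show "\<And>m. sb x < m \<Longrightarrow> x m = 0" unfolding sb_def by blast
  qed
  have x00: "x 0 = 0" if "x \<in> FS" for x using that unfolding FS_def lp_space_def by blast
  have N1': "(1::nat) \<in> {1..N}" using N1 by simp
  have dg1: "dg x (Suc 0) = x" for x unfolding dg_def using N1' by simp
  have sm: "strict_mono nk" using sq unfolding SEQ_def by blast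
  have trunc_FS: "trunc S x \<in> FS" if "x \<in> lp_space p" for S x
    unfolding FS_def using trunc_lp[OF that p0] by (auto simp: trunc_def intro!: exI[of _ S])
  have dense: "dense_in_ms (lp_space p) (lp_dist p) FS"
    unfolding dense_in_ms_def
  proof (intro conjI ballI allI impI)
    show "FS \<subseteq> lp_space p" unfolding FS_def by blast
    fix x :: "nat \<Rightarrow> 'k" and e :: real assume x: "x \<in> lp_space p" and e: "e > 0"
    obtain S where "lp_dist p x (trunc S x) < e" using trunc_small[OF x p0 e] by blast
    thus "\<exists>a\<in>FS. lp_dist p x a < e" using trunc_FS[OF x] by blast
  qed
  have W0s: "W0 \<subseteq> dsum_carrier N (lp_space p)"
    unfolding W0_def dg_def FS_def using diag_mem by auto
  have diag: "\<forall>y\<in>lp_space p. \<forall>e>0. \<exists>w\<in>W0. dsum_dist N (lp_dist p) w (\<lambda>r. if r \<in> {1..N} then y else 0) < e"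
  proof (intro ballI allI impI)
    fix y :: "nat \<Rightarrow> 'k" and e :: real assume y: "y \<in> lp_space p" and e: "e > 0"
    obtain S where S: "lp_dist p y (trunc S y) < e / real N" using trunc_small[OF y p0, of "e / real N"] e N1 by auto
    have "dsum_dist N (lp_dist p) (dg (trunc S y)) (\<lambda>r. if r \<in> {1..N} then y else 0) < e"
      unfolding dsum_dist_def dg_def by (rule sum_lt[OF N1]) (use S lp_dist_sym[of p "trunc S y" y] in auto)
    moreover have "dg (trunc S y) \<in> W0" unfolding W0_def using trunc_FS[OF y] by blast
    ultimately show "\<exists>w\<in>W0. dsum_dist N (lp_dist p) w (\<lambda>r. if r \<in> {1..N} then y else 0) < e" by blast
  qed
  have Rm: "\<forall>k. \<forall>w\<in>W0. Rk k w \<in> lp_space p" unfolding Rk_def using Rop_lp by blast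
  have Y0c: "\<forall>i\<in>{1..N}. \<forall>y\<in>FS. conv_ms (lp_dist p) (\<lambda>k. (T i ^^ nk k) y) 0"
  proof (intro ballI)
    fix i y assume i: "i \<in> {1..N}" and y: "y \<in> FS"
    have "eventually (\<lambda>k. lp_dist p ((T i ^^ nk k) y) 0 = 0) sequentially"
      using ev_kill[OF sq, of "sb y"]
    proof (rule eventually_mono)
      fix k assume k: "sb y < nk k"
      show "lp_dist p ((T i ^^ nk k) y) 0 = 0" using T_kill[OF i sbp[OF y] k] by (simp add: lp_dist_self)
    qed
    thus "conv_ms (lp_dist p) (\<lambda>k. (T i ^^ nk k) y) 0" unfolding conv_ms_def by (rule tendsto_eventually)
  qed
  have est: "eventually (\<lambda>k. sb x < nk k \<and> lp_dist p (Rop (nk k) (sb x) x) 0 < e \<and>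
     (\<forall>l\<in>{1..N}. lp_dist p ((T l ^^ nk k) (Rop (nk k) (sb x) x)) x < e)) sequentially"
    if x: "x \<in> FS" and e: "e > 0" for x e
    by (rule seq_est[where y=x, OF sq x00[OF x] sbp[OF x] e])
  have Rc: "\<forall>w\<in>W0. conv_ms (lp_dist p) (\<lambda>k. Rk k w) 0"
  proof
    fix w assume "w \<in> W0"
    then obtain x where x: "x \<in> FS" and w: "w = dg x" unfolding W0_def by blast
    show "conv_ms (lp_dist p) (\<lambda>k. Rk k w) 0"
      unfolding conv_ms_def
    proof (rule conv_of_ev)
      fix e :: real assume e: "e > 0"
      show "eventually (\<lambda>k. lp_dist p (Rk k w) 0 < e) sequentially"
        using est[OF x e] by (rule eventually_mono) (simp add: Rk_def w dg1)
    qed (rule lp_dist_nonneg)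
  qed
  have Tc: "\<forall>w\<in>W0. \<forall>i\<in>{1..N}. \<exists>y. in_conv_hull N w y \<and> conv_ms (lp_dist p) (\<lambda>k. (T i ^^ nk k) (Rk k w)) y"
  proof (intro ballI)
    fix w i assume "w \<in> W0" and i: "i \<in> {1..N}"
    then obtain x where x: "x \<in> FS" and w: "w = dg x" unfolding W0_def by blast
    have hull: "in_conv_hull N w x"
      unfolding in_conv_hull_def
    proof (intro exI[of _ "\<lambda>j. if j = 1 then 1 else 0"] conjI)
      show "\<forall>j\<in>{1..N}. 0 \<le> (if j = 1 then 1 else (0::real))" by simp
      show "(\<Sum>j\<in>{1..N}. if j = 1 then 1 else (0::real)) = 1" using N1' by simp
      show "x = (\<lambda>a. \<Sum>j\<in>{1..N}. (if j = 1 then 1 else (0::real)) *\<^sub>R w j a)"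
        using N1' by (simp add: w dg_def if_distrib[of "\<lambda>c. c *\<^sub>R _"] cong: if_cong)
    qed
    have "conv_ms (lp_dist p) (\<lambda>k. (T i ^^ nk k) (Rk k w)) x"
      unfolding conv_ms_def
    proof (rule conv_of_ev)
      fix e :: real assume e: "e > 0"
      show "eventually (\<lambda>k. lp_dist p ((T i ^^ nk k) (Rk k w)) x < e) sequentially"
        using est[OF x e] by (rule eventually_mono) (use i in \<open>simp add: Rk_def w dg1\<close>)
    qed (rule lp_dist_nonneg)
    thus "\<exists>y. in_conv_hull N w y \<and> conv_ms (lp_dist p) (\<lambda>k. (T i ^^ nk k) (Rk k w)) y" using hull by blast
  qed
  show ?thesis unfolding sim_hc_criterion_def
    using sm dense W0s diag Rm Y0c Rc Tc by blast
qed

end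



lemma dsum2: "dsum_dist 2 d a b = d (a 1) (b 1) + d (a 2) (b 2)"
  unfolding dsum_dist_def by (simp add: numeral_2_eq_2 atLeastAtMostSuc_conv)

context PS begin

lemma T_add: assumes i: "i \<in> {1..N}" and n: "n \<ge> 1"
  shows "(T i ^^ n) (\<lambda>m. b m + c m) = (\<lambda>m. (T i ^^ n) b m + (T i ^^ n) c m)"
proof
  fix m show "(T i ^^ n) (\<lambda>m. b m + c m) m = (T i ^^ n) b m + (T i ^^ n) c m"
  proof (cases "m = 0")
    case True
    have z: "(T i ^^ n) z 0 = 0" for z :: "nat \<Rightarrow> 'k" by (rule shift_pow0[OF n])
    show ?thesis unfolding True z by simp
  next
    case False hence m1: "m \<ge> 1" by simp
    show ?thesis using T_pow[OF i m1, of n] by (simp add: algebra_simps)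
  qed
qed

lemma SEQ_WM:
  assumes sq: "SEQ nk"
  shows "s_weakly_mixing (lp_space p) (lp_dist p) N T"
  unfolding s_weakly_mixing_def s_top_transitive_def
proof (intro allI impI)
  define CR where "CR = dsum_carrier 2 (lp_space p :: (nat \<Rightarrow> 'k) set)"
  define d where "d = dsum_dist 2 (lp_dist p :: (nat \<Rightarrow> 'k) \<Rightarrow> _)"
  fix U V :: "(nat \<Rightarrow> nat \<Rightarrow> 'k) set" assume oU: "open_in_ms (dsum_carrier 2 (lp_space p)) (dsum_dist 2 (lp_dist p)) U"
    and oV: "open_in_ms (dsum_carrier 2 (lp_space p)) (dsum_dist 2 (lp_dist p)) V"
    and Une: "U \<noteq> {}" and Vne: "V \<noteq> {}"
  obtain u where uU: "u \<in> U" using Une by blast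
  obtain v where vV: "v \<in> V" using Vne by blast
  obtain e1 where e1: "e1 > 0" "\<forall>y\<in>CR. d u y < e1 \<longrightarrow> y \<in> U"
    using oU uU unfolding open_in_ms_def CR_def d_def by blast
  obtain e2 where e2: "e2 > 0" "\<forall>y\<in>CR. d v y < e2 \<longrightarrow> y \<in> V"
    using oV vV unfolding open_in_ms_def CR_def d_def by blast
  have uC: "u \<in> CR" and vC: "v \<in> CR" using oU oV uU vV unfolding open_in_ms_def CR_def by blast+
  have ul: "u r \<in> lp_space p" "v r \<in> lp_space p" if "r \<in> {1..2}" for r
    using uC vC that unfolding CR_def dsum_carrier_def by blast+
  define e where "e = min e1 e2"
  have e0: "e > 0" and e8: "e / 8 > 0" using e1 e2 unfolding e_def by auto
  obtain S1 where S1: "\<forall>S\<ge>S1. lp_dist p (u 1) (trunc S (u 1)) < e / 8" using trunc_small[OF ul(1) p0 e8, of 1] by auto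
  obtain S2 where S2: "\<forall>S\<ge>S2. lp_dist p (u 2) (trunc S (u 2)) < e / 8" using trunc_small[OF ul(1) p0 e8, of 2] by auto
  obtain S3 where S3: "\<forall>S\<ge>S3. lp_dist p (v 1) (trunc S (v 1)) < e / 8" using trunc_small[OF ul(2) p0 e8, of 1] by auto
  obtain S4 where S4: "\<forall>S\<ge>S4. lp_dist p (v 2) (trunc S (v 2)) < e / 8" using trunc_small[OF ul(2) p0 e8, of 2] by auto
  define S where "S = S1 + S2 + S3 + S4"
  have tr: "lp_dist p (u r) (trunc S (u r)) < e / 8" "lp_dist p (v r) (trunc S (v r)) < e / 8"
    if r: "r \<in> {1..2}" for r
  proof -
    have "r = 1 \<or> r = 2" using r by auto
    thus "lp_dist p (u r) (trunc S (u r)) < e / 8" "lp_dist p (v r) (trunc S (v r)) < e / 8"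
      using S1 S2 S3 S4 unfolding S_def by auto
  qed
  define a where "a r = trunc S (u r)" for r
  define b where "b r = trunc S (v r)" for r
  have al: "a r \<in> lp_space p" "b r \<in> lp_space p" if "r \<in> {1..2}" for r
    unfolding a_def b_def using trunc_lp[OF ul(1)[OF that] p0] trunc_lp[OF ul(2)[OF that] p0] by auto
  have a0: "a r 0 = 0" if "r \<in> {1..2}" for r using al(1)[OF that] unfolding lp_space_def by blast
  have as: "\<And>m. S < m \<Longrightarrow> a r m = 0" "\<And>m. S < m \<Longrightarrow> b r m = 0" for r unfolding a_def b_def trunc_def by auto
  have ev: "eventually (\<lambda>k. S < nk k \<and> lp_dist p (Rop (nk k) S (a r)) 0 < e/8 \<and>
     (\<forall>l\<in>{1..N}. lp_dist p ((T l ^^ nk k) (Rop (nk k) S (a r))) (a r) < e/8)) sequentially"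
    if r: "r \<in> {1..2}" for r
    by (rule seq_est[where y="a r", OF sq a0[OF r] as(1) e8])
  obtain k where k: "\<forall>r\<in>{1..2}. S < nk k \<and> lp_dist p (Rop (nk k) S (a r)) 0 < e/8 \<and>
     (\<forall>l\<in>{1..N}. lp_dist p ((T l ^^ nk k) (Rop (nk k) S (a r))) (a r) < e/8)"
  proof -
    have "eventually (\<lambda>k. \<forall>r\<in>{1..2}. S < nk k \<and> lp_dist p (Rop (nk k) S (a r)) 0 < e/8 \<and>
     (\<forall>l\<in>{1..N}. lp_dist p ((T l ^^ nk k) (Rop (nk k) S (a r))) (a r) < e/8)) sequentially"
      by (rule eventually_ball_finite) (use ev in auto)
    thus ?thesis using that eventually_happens'[OF sequentially_bot] by blast
  qed
  define n where "n = nk k"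
  have Sn: "S < n" using k unfolding n_def by (meson atLeastAtMost_iff one_le_numeral order_refl)
  hence n1: "n \<ge> 1" by simp
  define Y where "Y = (\<lambda>r. if r \<in> {1..2} then (\<lambda>m. b r m + Rop n S (a r) m) else 0)"
  have YC: "Y \<in> CR" unfolding Y_def CR_def dsum_carrier_def
    using lp_add_mem[OF al(2) Rop_lp p0] by auto
  have dvY: "d v Y < e2"
  proof -
    have "lp_dist p (v r) (Y r) < e / 2" if r: "r \<in> {1..2}" for r
    proof (rule quasi_tri[OF p1])
      show "e / 2 > 0" using e0 by simp
      show "summable (\<lambda>m. norm (v r m - b r m) powr p)" by (rule lp_diff_summable[OF ul(2)[OF r] al(2)[OF r] p0])
      have "summable (\<lambda>m. norm (Rop n S (a r) m) powr p)" using Rop_lp unfolding lp_space_def by blast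
      thus "summable (\<lambda>m. norm (b r m - Y r m) powr p)" unfolding Y_def using r by simp
      show "lp_dist p (v r) (b r) < e / 2 / 4" using tr(2)[OF r] unfolding b_def by simp
      have "lp_dist p (b r) (Y r) = lp_dist p (Rop n S (a r)) 0"
        unfolding lp_dist_def Y_def using r by simp
      thus "lp_dist p (b r) (Y r) < e / 2 / 4" using k r unfolding n_def by simp
    qed
    hence "d v Y < e / 2 + e / 2" unfolding d_def dsum2 by (smt (verit) atLeastAtMost_iff one_le_numeral order_refl)
    thus ?thesis unfolding e_def by simp
  qed
  have YV: "Y \<in> V" using e2 dvY YC by blast
  have TU: "(dsum_op 2 (T i) ^^ n) Y \<in> U" if i: "i \<in> {1..N}" for i
  proof -
    have TYC: "(dsum_op 2 (T i) ^^ n) Y \<in> CR"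
      unfolding CR_def by (rule dsum_pow_mem) (use YC T_lp[OF i] CR_def in auto)
    have comp: "(dsum_op 2 (T i) ^^ n) Y r = (T i ^^ n) (Rop n S (a r))" if r: "r \<in> {1..2}" for r
    proof -
      have "(dsum_op 2 (T i) ^^ n) Y r = (T i ^^ n) (Y r)"
        using dsum_pow[where x=Y and R=2 and X="lp_space p" and S="T i" and n=n] YC r unfolding CR_def by simp
      also have "\<dots> = (\<lambda>m. (T i ^^ n) (b r) m + (T i ^^ n) (Rop n S (a r)) m)"
        unfolding Y_def using r T_add[OF i n1] by simp
      also have "(T i ^^ n) (b r) = 0" by (rule T_kill[OF i as(2) Sn])
      finally show ?thesis by simp
    qed
    have "lp_dist p (u r) ((dsum_op 2 (T i) ^^ n) Y r) < e / 2" if r: "r \<in> {1..2}" for r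
      unfolding comp[OF r]
    proof (rule quasi_tri[OF p1])
      show "e / 2 > 0" using e0 by simp
      show "summable (\<lambda>m. norm (u r m - a r m) powr p)" by (rule lp_diff_summable[OF ul(1)[OF r] al(1)[OF r] p0])
      show "summable (\<lambda>m. norm (a r m - (T i ^^ n) (Rop n S (a r)) m) powr p)"
        by (rule lp_diff_summable[OF al(1)[OF r] Tn_lp[OF i Rop_lp] p0])
      show "lp_dist p (u r) (a r) < e / 2 / 4" using tr(1)[OF r] unfolding a_def by simp
      have "lp_dist p ((T i ^^ n) (Rop n S (a r))) (a r) < e / 8" using k r i unfolding n_def by blast
      thus "lp_dist p (a r) ((T i ^^ n) (Rop n S (a r))) < e / 2 / 4" using lp_dist_sym by (metis divide_divide_eq_left num_double numeral_times_numeral)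
    qed
    hence "d u ((dsum_op 2 (T i) ^^ n) Y) < e / 2 + e / 2" unfolding d_def dsum2 by (smt (verit) atLeastAtMost_iff one_le_numeral order_refl)
    hence "d u ((dsum_op 2 (T i) ^^ n) Y) < e1" unfolding e_def by simp
    thus ?thesis using e1 TYC by blast
  qed
  show "\<exists>n\<ge>1. \<exists>y\<in>V. \<forall>i\<in>{1..N}. ((\<lambda>i. dsum_op 2 (T i)) i ^^ n) y \<in> U"
    using n1 YV TU by blast
qed

end


theorem theorem3p5:
  fixes p :: real and N :: nat
    and f :: "nat \<Rightarrow> nat \<Rightarrow> nat"
    and w :: "nat \<Rightarrow> nat \<Rightarrow> 'k::real_normed_field"
  assumes "scalars_R_or_C TYPE('k)"
    and "1 \<le> p"
    and "2 \<le> N"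
    and "\<forall>i\<in>{1..N}. pseudo_shift_data (f i) (w i)"
  shows
    "(s_weakly_mixing (lp_space p) (lp_dist p) N (\<lambda>i. pseudo_shift (f i) (w i))
        \<longleftrightarrow> sim_hc_criterion (lp_space p) (lp_dist p) N (\<lambda>i. pseudo_shift (f i) (w i)))
   \<and> (sim_hc_criterion (lp_space p) (lp_dist p) N (\<lambda>i. pseudo_shift (f i) (w i))
        \<longleftrightarrow> (\<forall>R\<ge>1. sim_bc_criterion (dsum_carrier R (lp_space p)) (dsum_dist R (lp_dist p)) N
                        (\<lambda>i. dsum_op R (pseudo_shift (f i) (w i)))))
   \<and> ((\<forall>R\<ge>1. sim_bc_criterion (dsum_carrier R (lp_space p)) (dsum_dist R (lp_dist p)) N
                        (\<lambda>i. dsum_op R (pseudo_shift (f i) (w i))))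
        \<longleftrightarrow> (\<exists>nk::nat \<Rightarrow> nat. strict_mono nk \<and> (\<forall>k. 0 < nk k) \<and>
              (\<forall>i\<in>{1..N}. \<forall>m\<ge>1.
                  filterlim (\<lambda>k. norm (Wprod (f i) (w i) m (nk k))) at_top sequentially) \<and>
              (\<forall>e>0. \<forall>K M. M \<ge> 1 \<longrightarrow> (\<exists>k\<ge>K. \<forall>i\<in>{1..N}. \<forall>l\<in>{1..N}. i \<noteq> l \<longrightarrow>
                  (\<forall>m\<in>{1..M}. \<forall>m'. m' \<ge> 1 \<longrightarrow> m' \<notin> {1..M} \<longrightarrow>
                      (f l ^^ nk k) m = (f i ^^ nk k) m' \<longrightarrow>
                      norm (Wprod (f i) (w i) m' (nk k) / Wprod (f l) (w l) m (nk k)) < e) \<and>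
                  (\<forall>m\<in>{1..M}. \<forall>m'\<in>{1..M}.
                      (f l ^^ nk k) m = (f i ^^ nk k) m' \<longrightarrow>
                      m = m' \<and>
                      norm (Wprod (f i) (w i) m' (nk k) / Wprod (f l) (w l) m (nk k) - 1) < e)))))"
proof -
  interpret PS p N f w
    by unfold_locales (use assms in auto)
  define WM where "WM = s_weakly_mixing (lp_space p) (lp_dist p) N (\<lambda>i. pseudo_shift (f i) (w i))"
  define HC where "HC = sim_hc_criterion (lp_space p) (lp_dist p) N (\<lambda>i. pseudo_shift (f i) (w i))"
  define BC where "BC = (\<forall>R\<ge>1. sim_bc_criterion (dsum_carrier R (lp_space p)) (dsum_dist R (lp_dist p)) N
                        (\<lambda>i. dsum_op R (pseudo_shift (f i) (w i))))"
  have IVeq: "IV \<longleftrightarrow> (\<exists>nk::nat \<Rightarrow> nat. strict_mono nk \<and> (\<forall>k. 0 < nk k) \<and>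
              (\<forall>i\<in>{1..N}. \<forall>m\<ge>1.
                  filterlim (\<lambda>k. norm (Wprod (f i) (w i) m (nk k))) at_top sequentially) \<and>
              (\<forall>e>0. \<forall>K M. M \<ge> 1 \<longrightarrow> (\<exists>k\<ge>K. \<forall>i\<in>{1..N}. \<forall>l\<in>{1..N}. i \<noteq> l \<longrightarrow>
                  (\<forall>m\<in>{1..M}. \<forall>m'. m' \<ge> 1 \<longrightarrow> m' \<notin> {1..M} \<longrightarrow>
                      (f l ^^ nk k) m = (f i ^^ nk k) m' \<longrightarrow>
                      norm (Wprod (f i) (w i) m' (nk k) / Wprod (f l) (w l) m (nk k)) < e) \<and>
                  (\<forall>m\<in>{1..M}. \<forall>m'\<in>{1..M}.
                      (f l ^^ nk k) m = (f i ^^ nk k) m' \<longrightarrow>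
                      m = m' \<and>
                      norm (Wprod (f i) (w i) m' (nk k) / Wprod (f l) (w l) m (nk k) - 1) < e))))"
    unfolding IV_def goodb_def by (rule refl)
  have WMQ: "WM \<Longrightarrow> Qprop" unfolding WM_def by (rule Q0_Q[OF WM_Q0])
  have HCQ: "HC \<Longrightarrow> Qprop" unfolding HC_def by (rule Q0_Q[OF HC_Q0])
  have BCQ: "BC \<Longrightarrow> Qprop" unfolding BC_def by (rule Q0_Q[OF BC_Q0]) simp
  have IVQ: "IV \<Longrightarrow> Qprop" by (rule IV_Q)
  have QA: "WM \<and> HC \<and> BC \<and> IV" if Q: Qprop
  proof -
    obtain nk where sq: "SEQ nk" using Q_SEQ[OF Q] by blast
    show ?thesis unfolding WM_def HC_def BC_def
      using SEQ_WM[OF sq] SEQ_HC[OF sq] SEQ_BC[OF sq] SEQ_IV[OF sq] by blast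
  qed
  have "(WM \<longleftrightarrow> HC) \<and> (HC \<longleftrightarrow> BC) \<and> (BC \<longleftrightarrow> IV)"
    using WMQ HCQ BCQ IVQ QA by blast
  thus ?thesis unfolding WM_def HC_def BC_def IVeq .
qed

end
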